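(* (a) For $n=5$ and for every $n\ge 7$, $\sigma(K_{3,1,1},n)=4n-2$; equivalently, $4n-2$ is the least even integer such that every $n$-term graphical sequence $S$ with $\sigma(S)\ge 4n-2$ is potentially $K_{3,1,1}$-graphic. (b) For $n=6$: if $S$ is a $6$-term graphical sequence with $\sigma(S)\ge 22$, then either $S$ is potentially $K_{3,1,1}$-graphic or $S=(4,4,4,4,4,4)$; moreover $(4,4,4,4,4,4)$ is not potentially $K_{3,1,1}$-graphic, and consequently $\sigma(K_{3,1,1},6)=26$.
   Context: A finite sequence $S=(d_1,\dots,d_n)$ of non-negative integers is graphical if it is the degree sequence of some simple graph on $n$ vertices (a realization of $S$). Write $\sigma(S)=d_1+\dots+d_n$. For a graph $H$, a graphical sequence $S$ is potentially $H$-graphical if some realization of $S$ contains $H$ as a subgraph. $K_{3,1,1}$ denotes the complete 3-partite graph with parts of sizes $3,1,1$. $\sigma(H,n)$ denotes the minimum even integer $l$ such that every $n$-term graphical sequence $S$ with $\sigma(S)\ge l$ is potentially $H$-graphical. *)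

theory Defs
  imports Main
begin

definition simple_graph_on :: "nat \<Rightarrow> (nat \<Rightarrow> nat \<Rightarrow> bool) \<Rightarrow> bool" where
  "simple_graph_on n E \<longleftrightarrow>
     (\<forall>i j. E i j \<longrightarrow> i < n \<and> j < n) \<and>
     (\<forall>i. \<not> E i i) \<and> (\<forall>i j. E i j \<longrightarrow> E j i)"

definition degree :: "nat \<Rightarrow> (nat \<Rightarrow> nat \<Rightarrow> bool) \<Rightarrow> nat \<Rightarrow> nat" where
  "degree n E i = card {j. j < n \<and> E i j}"

definition realizes :: "(nat \<Rightarrow> nat \<Rightarrow> bool) \<Rightarrow> nat list \<Rightarrow> bool" where
  "realizes E S \<longleftrightarrow> simple_graph_on (length S) E \<and>
     (\<forall>i < length S. degree (length S) E i = S ! i)"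

definition graphical :: "nat list \<Rightarrow> bool" where
  "graphical S \<longleftrightarrow> (\<exists>E. realizes E S)"

definition contains_subgraph ::
  "nat \<Rightarrow> (nat \<Rightarrow> nat \<Rightarrow> bool) \<Rightarrow> nat \<Rightarrow> (nat \<Rightarrow> nat \<Rightarrow> bool) \<Rightarrow> bool" where
  "contains_subgraph n E k F \<longleftrightarrow>
     (\<exists>f. inj_on f {0..<k} \<and> f ` {0..<k} \<subseteq> {0..<n} \<and>
          (\<forall>i<k. \<forall>j<k. F i j \<longrightarrow> E (f i) (f j)))"

definition potentially_graphic :: "nat \<Rightarrow> (nat \<Rightarrow> nat \<Rightarrow> bool) \<Rightarrow> nat list \<Rightarrow> bool" where
  "potentially_graphic k F S \<longleftrightarrow>
     graphical S \<and> (\<exists>E. realizes E S \<and> contains_subgraph (length S) E k F)"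

definition sigma_pot :: "nat \<Rightarrow> (nat \<Rightarrow> nat \<Rightarrow> bool) \<Rightarrow> nat \<Rightarrow> nat" where
  "sigma_pot k F n = (LEAST l. even l \<and>
     (\<forall>S. length S = n \<and> graphical S \<and> sum_list S \<ge> l \<longrightarrow> potentially_graphic k F S))"

definition part311 :: "nat \<Rightarrow> nat" where
  "part311 i = (if i < 3 then 0 else if i = 3 then 1 else 2)"

definition K311 :: "nat \<Rightarrow> nat \<Rightarrow> bool" where
  "K311 i j \<longleftrightarrow> i < 5 \<and> j < 5 \<and> part311 i \<noteq> part311 j"

end

theory Submission
  imports Defs
begin


definition sg :: "nat set \<Rightarrow> (nat \<Rightarrow> nat \<Rightarrow> bool) \<Rightarrow> bool" where
  "sg V E \<longleftrightarrow> (\<forall>i j. E i j \<longrightarrow> i \<in> V \<and> j \<in> V) \<and> (\<forall>i. \<not> E i i) \<and> (\<forall>i j. E i j \<longrightarrow> E j i)"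

definition dg :: "nat set \<Rightarrow> (nat \<Rightarrow> nat \<Rightarrow> bool) \<Rightarrow> nat \<Rightarrow> nat" where
  "dg V E x = card {y\<in>V. E x y}"

definition book :: "(nat \<Rightarrow> nat \<Rightarrow> bool) \<Rightarrow> bool" where
  "book E \<longleftrightarrow> (\<exists>u v a b c. distinct [u,v,a,b,c] \<and> E u v \<and> E u a \<and> E u b \<and> E u c
      \<and> E v a \<and> E v b \<and> E v c)"

definition pot :: "nat set \<Rightarrow> (nat \<Rightarrow> nat \<Rightarrow> bool) \<Rightarrow> bool" where
  "pot V E \<longleftrightarrow> (\<exists>F. sg V F \<and> (\<forall>x\<in>V. dg V F x = dg V E x) \<and> book F)"

definition delv :: "nat \<Rightarrow> (nat \<Rightarrow> nat \<Rightarrow> bool) \<Rightarrow> nat \<Rightarrow> nat \<Rightarrow> bool" where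
  "delv x E = (\<lambda>i j. E i j \<and> i \<noteq> x \<and> j \<noteq> x)"

definition addv :: "nat \<Rightarrow> nat set \<Rightarrow> (nat \<Rightarrow> nat \<Rightarrow> bool) \<Rightarrow> nat \<Rightarrow> nat \<Rightarrow> bool" where
  "addv x T E = (\<lambda>i j. E i j \<or> (i = x \<and> j \<in> T) \<or> (j = x \<and> i \<in> T))"

definition dele :: "nat \<Rightarrow> nat \<Rightarrow> (nat \<Rightarrow> nat \<Rightarrow> bool) \<Rightarrow> nat \<Rightarrow> nat \<Rightarrow> bool" where
  "dele a b E = (\<lambda>i j. E i j \<and> \<not> ((i = a \<and> j = b) \<or> (i = b \<and> j = a)))"

definition adde :: "nat \<Rightarrow> nat \<Rightarrow> (nat \<Rightarrow> nat \<Rightarrow> bool) \<Rightarrow> nat \<Rightarrow> nat \<Rightarrow> bool" where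
  "adde a b E = (\<lambda>i j. E i j \<or> (i = a \<and> j = b) \<or> (i = b \<and> j = a))"

lemma sgD: assumes "sg V E" shows "E i j \<Longrightarrow> i \<in> V" "E i j \<Longrightarrow> j \<in> V" "\<not> E i i"
  "E i j \<Longrightarrow> i \<noteq> j"
  using assms unfolding sg_def by blast+

lemma sgS: assumes "sg V E" "E i j" shows "E j i"
  using assms unfolding sg_def by blast

lemma sym_iff: "sg V E \<Longrightarrow> E i j \<longleftrightarrow> E j i"
  using sgS by blast

lemma dg_le: assumes "finite V" "sg V E" "x \<in> V" shows "dg V E x \<le> card V - 1"
proof -
  have "{y\<in>V. E x y} \<subseteq> V - {x}" using sgD[OF assms(2)] by auto
  hence "card {y\<in>V. E x y} \<le> card (V - {x})" using assms(1) by (intro card_mono) auto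
  thus ?thesis using assms by (simp add: dg_def)
qed

lemma dg_full: assumes "finite V" "sg V E" "x \<in> V" "dg V E x = card V - 1" "y \<in> V" "y \<noteq> x"
  shows "E x y"
proof -
  have s: "{y\<in>V. E x y} \<subseteq> V - {x}" using sgD[OF assms(2)] by auto
  have "card {y\<in>V. E x y} = card (V - {x})" using assms by (simp add: dg_def)
  hence "{y\<in>V. E x y} = V - {x}" using s assms(1) by (intro card_subset_eq) auto
  thus ?thesis using assms by auto
qed

lemma dg_non1: assumes "finite V" "sg V E" "x \<in> V" "s \<in> V" "s \<noteq> x" "\<not> E x s"
  shows "dg V E x \<le> card V - 2"
proof -
  have "{y\<in>V. E x y} \<subseteq> V - {x, s}" using sgD[OF assms(2)] assms by auto
  hence "card {y\<in>V. E x y} \<le> card (V - {x, s})" using assms(1) by (intro card_mono) auto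
  also have "\<dots> = card V - 2" using assms by (simp add: card_Diff_subset)
  finally show ?thesis by (simp add: dg_def)
qed

lemma dg_non2: assumes "finite V" "sg V E" "x \<in> V" "s \<in> V" "s \<noteq> x" "\<not> E x s"
   "t \<in> V" "t \<noteq> x" "t \<noteq> s" "\<not> E x t"
  shows "dg V E x \<le> card V - 3"
proof -
  have "{y\<in>V. E x y} \<subseteq> V - {x, s, t}" using sgD[OF assms(2)] assms by auto
  hence "card {y\<in>V. E x y} \<le> card (V - {x, s, t})" using assms(1) by (intro card_mono) auto
  also have "\<dots> = card V - 3" using assms by (simp add: card_Diff_subset)
  finally show ?thesis by (simp add: dg_def)
qed

lemma book_mono: assumes "book E" "\<And>i j. E i j \<Longrightarrow> F i j" shows "book F"
proof -
  obtain u v a b c where "distinct [u,v,a,b,c] \<and> E u v \<and> E u a \<and> E u b \<and> E u c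
      \<and> E v a \<and> E v b \<and> E v c" using assms(1) unfolding book_def by blast
  thus ?thesis unfolding book_def using assms(2) by blast
qed

lemma bookI: "distinct [u,v,a,b,c] \<Longrightarrow> E u v \<Longrightarrow> E u a \<Longrightarrow> E u b \<Longrightarrow> E u c
      \<Longrightarrow> E v a \<Longrightarrow> E v b \<Longrightarrow> E v c \<Longrightarrow> book E"
  unfolding book_def by blast

lemma pot_self: "sg V E \<Longrightarrow> book E \<Longrightarrow> pot V E"
  unfolding pot_def by blast

lemma pot_trans: "pot V F \<Longrightarrow> sg V F \<Longrightarrow> (\<forall>x\<in>V. dg V F x = dg V E x) \<Longrightarrow> pot V E"
  unfolding pot_def by auto

lemma sg_delv: "sg V E \<Longrightarrow> sg (V - {x}) (delv x E)"
  unfolding sg_def delv_def by blast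

lemma dg_delv: assumes "sg V E" "y \<noteq> x"
  shows "dg (V - {x}) (delv x E) y = dg V E y - (if E y x then 1 else 0)"
proof -
  have "{z \<in> V - {x}. delv x E y z} = {z\<in>V. E y z} - {x}" using assms by (auto simp: delv_def)
  thus ?thesis using assms sgD[OF assms(1)] by (simp add: dg_def card_Diff_singleton_if)
qed

lemma dg_pos: assumes "finite V" "sg V E" "E y x" shows "1 \<le> dg V E y"
proof -
  have "x \<in> {z\<in>V. E y z}" using assms sgD[OF assms(2)] by auto
  hence "card {z\<in>V. E y z} \<noteq> 0" using assms(1) by auto
  thus ?thesis by (simp add: dg_def)
qed

lemma sum_delv: assumes "finite V" "sg V E" "x \<in> V"
  shows "(\<Sum>y\<in>V - {x}. dg (V - {x}) (delv x E) y) + 2 * dg V E x = (\<Sum>y\<in>V. dg V E y)"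
proof -
  let ?g = "\<lambda>y. if E y x then 1 else (0::nat)"
  have 1: "(\<Sum>y\<in>V - {x}. dg (V - {x}) (delv x E) y) = (\<Sum>y\<in>V - {x}. dg V E y - ?g y)"
    using dg_delv[OF assms(2)] by (intro sum.cong) auto
  have 2: "(\<Sum>y\<in>V - {x}. dg V E y - ?g y) + (\<Sum>y\<in>V - {x}. ?g y) = (\<Sum>y\<in>V - {x}. dg V E y)"
    unfolding sum.distrib[symmetric] using dg_pos[OF assms(1,2)] by (intro sum.cong) auto
  have 3: "(\<Sum>y\<in>V - {x}. ?g y) = dg V E x"
  proof -
    have "(\<Sum>y\<in>V - {x}. ?g y) = card ((V - {x}) \<inter> {y. E y x})"
      using assms(1) by (simp add: sum.If_cases)
    also have "(V - {x}) \<inter> {y. E y x} = {y\<in>V. E x y}" using sgD[OF assms(2)] sgS[OF assms(2)] by blast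
    finally show ?thesis by (simp add: dg_def)
  qed
  have 4: "(\<Sum>y\<in>V. dg V E y) = dg V E x + (\<Sum>y\<in>V - {x}. dg V E y)"
    using assms by (simp add: sum.remove)
  show ?thesis using 1 2 3 4 by simp
qed

lemma even_sum: assumes "finite V" "sg V E" shows "even (\<Sum>y\<in>V. dg V E y)"
  using assms
proof (induction V arbitrary: E rule: finite_induct)
  case empty thus ?case by simp
next
  case (insert x F)
  have F: "insert x F - {x} = F" using insert.hyps(2) by auto
  have sgF: "sg F (delv x E)" using sg_delv[OF insert.prems, of x] F by simp
  have ev: "even (\<Sum>y\<in>F. dg F (delv x E) y)" using insert.IH[OF sgF] .
  have eq: "(\<Sum>y\<in>F. dg F (delv x E) y) + 2 * dg (insert x F) E x = (\<Sum>y\<in>insert x F. dg (insert x F) E y)"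
    using sum_delv[OF _ insert.prems, of x] insert.hyps F by simp
  show ?case unfolding eq[symmetric] using ev by simp
qed

lemma sg_addv: "sg W E \<Longrightarrow> x \<notin> W \<Longrightarrow> T \<subseteq> W \<Longrightarrow> sg (insert x W) (addv x T E)"
  unfolding sg_def addv_def by blast

lemma dg_addv: assumes "sg W E" "x \<notin> W" "T \<subseteq> W" "finite W" "y \<in> W"
  shows "dg (insert x W) (addv x T E) y = dg W E y + (if y \<in> T then 1 else 0)"
proof -
  have "{z \<in> insert x W. addv x T E y z} = {z\<in>W. E y z} \<union> (if y \<in> T then {x} else {})"
    using assms sgD[OF assms(1)] by (auto simp: addv_def)
  thus ?thesis using assms by (simp add: dg_def)
qed

lemma dg_addv_x: assumes "sg W E" "x \<notin> W" "T \<subseteq> W"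
  shows "dg (insert x W) (addv x T E) x = card T"
proof -
  have "{z \<in> insert x W. addv x T E x z} = T"
    using assms sgD[OF assms(1)] by (auto simp: addv_def)
  thus ?thesis by (simp add: dg_def)
qed

lemma sg_adde: "sg V E \<Longrightarrow> a \<in> V \<Longrightarrow> b \<in> V \<Longrightarrow> a \<noteq> b \<Longrightarrow> sg V (adde a b E)"
  unfolding sg_def adde_def by blast

lemma dg_adde: assumes "sg V E" "a \<in> V" "b \<in> V" "a \<noteq> b" "\<not> E a b" "finite V"
  shows "dg V (adde a b E) y = dg V E y + (if y = a \<or> y = b then 1 else 0)"
proof -
  have "{z \<in> V. adde a b E y z} = {z\<in>V. E y z} \<union> (if y = a then {b} else if y = b then {a} else {})"
    using assms by (auto simp: adde_def)
  moreover have "b \<notin> {z\<in>V. E a z}" "a \<notin> {z\<in>V. E b z}" using assms sgD[OF assms(1)] sgS[OF assms(1), of b a] by auto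
  ultimately show ?thesis using assms by (auto simp: dg_def)
qed

lemma sg_dele: "sg V E \<Longrightarrow> sg V (dele a b E)"
  unfolding sg_def dele_def by blast

lemma dg_dele: assumes "sg V E" "E a b" "finite V"
  shows "dg V (dele a b E) y = dg V E y - (if y = a \<or> y = b then 1 else 0)"
proof -
  have ab: "a \<noteq> b" "a \<in> V" "b \<in> V" "E b a" using sgD[OF assms(1)] sgS[OF assms(1)] assms(2) by auto
  have "{z \<in> V. dele a b E y z} = {z\<in>V. E y z} - (if y = a then {b} else if y = b then {a} else {})"
    using ab by (auto simp: dele_def)
  thus ?thesis using assms ab by (auto simp: dg_def card_Diff_singleton_if)
qed



definition copy :: "(nat \<Rightarrow> nat \<Rightarrow> bool) \<Rightarrow> nat \<Rightarrow> nat \<Rightarrow> nat \<Rightarrow> nat \<Rightarrow> nat \<Rightarrow> bool" where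
  "copy H u v a b c \<longleftrightarrow> distinct [u,v,a,b,c] \<and> H u v \<and> H u a \<and> H u b \<and> H u c \<and> H v a \<and> H v b \<and> H v c"

definition cpl :: "nat \<Rightarrow> nat \<Rightarrow> nat \<Rightarrow> nat \<Rightarrow> nat \<Rightarrow> (nat \<times> nat) list" where
  "cpl u v a b c = [(u,v),(v,u),(u,a),(a,u),(u,b),(b,u),(u,c),(c,u),(v,a),(a,v),(v,b),(b,v),(v,c),(c,v)]"

lemma book_copy: "book H \<longleftrightarrow> (\<exists>u v a b c. copy H u v a b c)"
  unfolding book_def copy_def by blast

lemma copy_book: "copy H u v a b c \<Longrightarrow> book H"
  using book_copy by blast

lemma copy_mono: "copy H u v a b c \<Longrightarrow> (\<And>i j. H i j \<Longrightarrow> H' i j) \<Longrightarrow> copy H' u v a b c"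
  unfolding copy_def by blast

lemma copy_in: "sg W H \<Longrightarrow> copy H u v a b c \<Longrightarrow> u \<in> W \<and> v \<in> W \<and> a \<in> W \<and> b \<in> W \<and> c \<in> W"
  unfolding copy_def using sgD(1,2) by blast

lemma copy_dele: assumes "copy H u v a b c" "(p,q) \<notin> set (cpl u v a b c)"
  shows "copy (dele p q H) u v a b c"
proof -
  have n: "\<not>((s = p \<and> t = q) \<or> (s = q \<and> t = p))"
    if "(s,t) \<in> set (cpl u v a b c)" "(t,s) \<in> set (cpl u v a b c)" for s t
    using that assms(2) by blast
  have m: "(u,v) \<in> set (cpl u v a b c)" "(u,a) \<in> set (cpl u v a b c)" "(u,b) \<in> set (cpl u v a b c)"
    "(u,c) \<in> set (cpl u v a b c)" "(v,a) \<in> set (cpl u v a b c)" "(v,b) \<in> set (cpl u v a b c)"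
    "(v,c) \<in> set (cpl u v a b c)"
    "(v,u) \<in> set (cpl u v a b c)" "(a,u) \<in> set (cpl u v a b c)" "(b,u) \<in> set (cpl u v a b c)"
    "(c,u) \<in> set (cpl u v a b c)" "(a,v) \<in> set (cpl u v a b c)" "(b,v) \<in> set (cpl u v a b c)"
    "(c,v) \<in> set (cpl u v a b c)" by (simp_all add: cpl_def)
  show ?thesis using assms(1) n[OF m(1) m(8)] n[OF m(2) m(9)] n[OF m(3) m(10)] n[OF m(4) m(11)]
    n[OF m(5) m(12)] n[OF m(6) m(13)] n[OF m(7) m(14)]
    unfolding copy_def dele_def by simp
qed

lemma copy_addv: "copy H u v a b c \<Longrightarrow> copy (addv x T H) u v a b c"
  by (erule copy_mono) (simp add: addv_def)

lemma exists_big: assumes "finite A" "\<And>x. x \<in> A \<Longrightarrow> f x \<le> k" "card A * (k - 1) < sum f A"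
  shows "\<exists>x\<in>A. f x = k"
proof (rule ccontr)
  assume "\<not> ?thesis"
  hence "\<And>x. x \<in> A \<Longrightarrow> f x \<le> k - 1" using assms(2) by force
  hence "sum f A \<le> card A * (k - 1)" using sum_bounded_above[of A f "k - 1"] by simp
  thus False using assms(3) by simp
qed

lemma two_full_5: assumes "finite W" "card W = 5" "sg W H" "18 \<le> (\<Sum>y\<in>W. dg W H y)" "c \<in> W"
  shows "\<exists>u v. u \<in> W \<and> v \<in> W \<and> u \<noteq> c \<and> v \<noteq> c \<and> u \<noteq> v \<and> dg W H u = 4 \<and> dg W H v = 4"
proof -
  have le: "\<And>y. y \<in> W \<Longrightarrow> dg W H y \<le> 4" using dg_le[OF assms(1,3)] assms(2) by fastforce
  have s1: "(\<Sum>y\<in>W. dg W H y) = dg W H c + (\<Sum>y\<in>W - {c}. dg W H y)"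
    using assms by (simp add: sum.remove)
  have "card (W - {c}) = 4" using assms by simp
  moreover have "(\<Sum>y\<in>W - {c}. dg W H y) \<ge> 14" using s1 le[OF assms(5)] assms(4) by linarith
  ultimately obtain u where u: "u \<in> W - {c}" "dg W H u = 4"
    using exists_big[of "W - {c}" "dg W H" 4] le assms(1) by force
  have s2: "(\<Sum>y\<in>W - {c}. dg W H y) = dg W H u + (\<Sum>y\<in>W - {c} - {u}. dg W H y)"
    using assms u by (simp add: sum.remove)
  have "card (W - {c} - {u}) = 3" using assms u by simp
  moreover have "(\<Sum>y\<in>W - {c} - {u}. dg W H y) \<ge> 10" using s1 s2 u le[OF assms(5)] assms(4) by linarith
  ultimately obtain v where v: "v \<in> W - {c} - {u}" "dg W H v = 4"
    using exists_big[of "W - {c} - {u}" "dg W H" 4] le assms(1) by force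
  show ?thesis using u v by blast
qed

lemma base5: assumes "finite W" "card W = 5" "sg W H" "18 \<le> (\<Sum>y\<in>W. dg W H y)"
  shows "book H"
proof -
  obtain c where "c \<in> W" using assms(2) by fastforce
  then obtain u v where uv: "u \<in> W" "v \<in> W" "u \<noteq> v" "dg W H u = 4" "dg W H v = 4"
    using two_full_5[OF assms] by blast
  have "card (W - {u, v}) = 3" using assms uv by (simp add: card_Diff_subset)
  then obtain a b c where abc: "W - {u,v} = {a,b,c}" "a \<noteq> b" "b \<noteq> c" "a \<noteq> c"
    by (auto simp: card_3_iff)
  have fu: "\<And>y. y \<in> W \<Longrightarrow> y \<noteq> u \<Longrightarrow> H u y" using dg_full[OF assms(1,3) uv(1)] uv assms(2) by simp
  have fv: "\<And>y. y \<in> W \<Longrightarrow> y \<noteq> v \<Longrightarrow> H v y" using dg_full[OF assms(1,3) uv(2)] uv assms(2) by simp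
  have "a \<in> W" "b \<in> W" "c \<in> W" "a \<notin> {u,v}" "b \<notin> {u,v}" "c \<notin> {u,v}" using abc by blast+
  thus ?thesis using fu fv uv abc by (intro bookI[of u v a b c]) auto
qed

lemma count_edge: assumes "finite W" "sg W H" "c \<in> W" "finite X"
  "card X + 2 * dg W H c < (\<Sum>y\<in>W. dg W H y)"
  shows "\<exists>p q. H p q \<and> p \<noteq> c \<and> q \<noteq> c \<and> (p,q) \<notin> X"
proof -
  let ?P = "SIGMA p:W - {c}. {q\<in>W - {c}. H p q}"
  have c1: "card ?P = (\<Sum>p\<in>W - {c}. card {q\<in>W - {c}. H p q})"
    by (rule card_SigmaI) (use assms(1) in simp_all)
  have c2: "(\<Sum>p\<in>W - {c}. card {q\<in>W - {c}. H p q}) = (\<Sum>p\<in>W - {c}. dg (W - {c}) (delv c H) p)"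
  proof (rule sum.cong[OF refl])
    fix p assume "p \<in> W - {c}"
    hence "{q\<in>W - {c}. H p q} = {q\<in>W - {c}. delv c H p q}" unfolding delv_def by auto
    thus "card {q\<in>W - {c}. H p q} = dg (W - {c}) (delv c H) p" unfolding dg_def by simp
  qed
  have "card ?P + 2 * dg W H c = (\<Sum>y\<in>W. dg W H y)"
    using sum_delv[OF assms(1,2,3)] c1 c2 by simp
  hence "card X < card ?P" using assms(5) by simp
  hence "\<not> ?P \<subseteq> X" using card_mono[OF assms(4)] by (meson not_le)
  then obtain z where z: "z \<in> ?P" "z \<notin> X" by blast
  obtain p q where "z = (p,q)" by (cases z)
  thus ?thesis using z by blast
qed

lemma cp_bound: assumes "distinct [u,v,a,b,c]" "z \<in> {u,v,a,b,c}"
  shows "card (set (cpl u v a b c) - {(p,q). p = z \<or> q = z}) \<le> 10"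
proof -
  have e: "set (cpl u v a b c) - {(p,q). p = z \<or> q = z} = set (filter (\<lambda>(p,q). p \<noteq> z \<and> q \<noteq> z) (cpl u v a b c))"
    by auto
  have n: "u \<noteq> v" "u \<noteq> a" "u \<noteq> b" "u \<noteq> c" "v \<noteq> a" "v \<noteq> b" "v \<noteq> c" "a \<noteq> b" "a \<noteq> c" "b \<noteq> c"
     "v \<noteq> u" "a \<noteq> u" "b \<noteq> u" "c \<noteq> u" "a \<noteq> v" "b \<noteq> v" "c \<noteq> v" "b \<noteq> a" "c \<noteq> a" "c \<noteq> b"
    using assms(1) by auto
  have "length (filter (\<lambda>(p,q). p \<noteq> z \<and> q \<noteq> z) (cpl u v a b c)) \<le> 10"
  proof -
    have "z = u \<or> z = v \<or> z = a \<or> z = b \<or> z = c" using assms(2) by blast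
    thus ?thesis
    proof (elim disjE)
      assume "z = u" thus ?thesis using n by (simp add: cpl_def)
    next
      assume "z = v" thus ?thesis using n by (simp add: cpl_def)
    next
      assume "z = a" thus ?thesis using n by (simp add: cpl_def)
    next
      assume "z = b" thus ?thesis using n by (simp add: cpl_def)
    next
      assume "z = c" thus ?thesis using n by (simp add: cpl_def)
    qed
  qed
  thus ?thesis unfolding e using card_length order_trans by metis
qed

lemma recopy: assumes "finite W" "sg W H" "copy H u v a b c'" "c \<in> W" "c \<notin> {u,v,a,b,c'}"
  "\<not> dg W H c \<le> card W - 3"
  shows "\<exists>u v a b c''. copy H u v a b c'' \<and> c \<in> {u,v,a,b,c''}"
proof -
  have inW: "u \<in> W" "v \<in> W" "a \<in> W" "b \<in> W" "c' \<in> W" using copy_in[OF assms(2,3)] by auto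
  have two: "H c s \<or> H c t" if st: "s \<in> W" "t \<in> W" "s \<noteq> c" "t \<noteq> c" "t \<noteq> s" for s t
  proof (rule ccontr)
    assume "\<not> (H c s \<or> H c t)"
    hence "dg W H c \<le> card W - 3" using dg_non2[OF assms(1,2,4) st(1) st(3) _ st(2) st(4) st(5)] by blast
    thus False using assms(6) by blast
  qed
  have d: "distinct [u,v,a,b,c']" and e: "H u v" "H u a" "H u b" "H u c'" "H v a" "H v b" "H v c'"
    using assms(3) unfolding copy_def by auto
  have cn: "c \<noteq> u" "c \<noteq> v" "c \<noteq> a" "c \<noteq> b" "c \<noteq> c'" using assms(5) by auto
  show ?thesis
  proof (cases "H c u \<and> H c v")
    case True
    hence "H u c" "H v c" using sgS[OF assms(2)] by blast+
    hence "copy H u v a b c" using d e cn unfolding copy_def by simp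
    thus ?thesis by blast
  next
    case False
    show ?thesis
    proof (cases "H c u")
      case True
      hence "\<not> H c v" using False by blast
      hence hc: "H c a" "H c b" "H c c'" using two[of v a] two[of v b] two[of v c'] inW cn d by auto
      have "H u c" using True sgS[OF assms(2)] by blast
      hence "copy H u c a b c'" using d e cn hc unfolding copy_def by simp
      thus ?thesis by blast
    next
      case False
      hence hc: "H c a" "H c b" "H c c'" "H c v" using two[of u a] two[of u b] two[of u c'] two[of u v] inW cn d by auto
      have "H v c" using hc sgS[OF assms(2)] by blast
      hence "copy H v c a b c'" using d e cn hc unfolding copy_def by simp
      thus ?thesis by blast
    qed
  qed
qed

lemma liftC6: assumes "finite W" "card W = m" "6 \<le> m" "sg W H" "4*m - 2 \<le> (\<Sum>y\<in>W. dg W H y)"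
  "book H" "c \<in> W"
  shows "\<exists>u v a b c' p q. copy H u v a b c' \<and> H p q \<and> p \<noteq> c \<and> q \<noteq> c \<and> (p,q) \<notin> set (cpl u v a b c')"
proof -
  obtain u v a b c' where cp: "copy H u v a b c'" using assms(6) book_copy by blast
  have dgc: "dg W H c \<le> m - 1" using dg_le[OF assms(1,4,7)] assms(2) by simp
  have inK: "\<exists>p q. H p q \<and> p \<noteq> c \<and> q \<noteq> c \<and> (p,q) \<notin> set (cpl u v a b c')"
    if cp: "copy H u v a b c'" and cin: "c \<in> {u,v,a,b,c'}" for u v a b c'
  proof -
    let ?X = "set (cpl u v a b c') - {(p,q). p = c \<or> q = c}"
    have "card ?X \<le> 10" using cp_bound cp cin unfolding copy_def by blast
    hence "card ?X + 2 * dg W H c < (\<Sum>y\<in>W. dg W H y)" using dgc assms(3,5) by linarith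
    then obtain p q where "H p q" "p \<noteq> c" "q \<noteq> c" "(p,q) \<notin> ?X"
      using count_edge[OF assms(1,4,7), of ?X] by auto
    thus ?thesis by blast
  qed
  show ?thesis
  proof (cases "c \<in> {u,v,a,b,c'}")
    case True thus ?thesis using inK cp by blast
  next
    case False
    show ?thesis
    proof (cases "dg W H c \<le> card W - 3")
      case True
      let ?X = "set (cpl u v a b c')"
      have "card ?X \<le> 14" by (rule order_trans[OF card_length]) (simp add: cpl_def)
      hence "card ?X + 2 * dg W H c < (\<Sum>y\<in>W. dg W H y)" using True assms(2,3,5) by linarith
      then obtain p q where "H p q" "p \<noteq> c" "q \<noteq> c" "(p,q) \<notin> ?X"
        using count_edge[OF assms(1,4,7), of ?X] by auto
      thus ?thesis using cp by blast
    next
      case F2: False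
      obtain u v a b c'' where "copy H u v a b c''" "c \<in> {u,v,a,b,c''}"
        using recopy[OF assms(1,4) cp assms(7) False F2] by blast
      thus ?thesis using inK by blast
    qed
  qed
qed

lemma liftC5: assumes "finite W" "card W = 5" "sg W H" "18 \<le> (\<Sum>y\<in>W. dg W H y)" "c \<in> W"
  shows "\<exists>u v a b c' p q. copy H u v a b c' \<and> H p q \<and> p \<noteq> c \<and> q \<noteq> c \<and> (p,q) \<notin> set (cpl u v a b c')"
proof -
  obtain u v where uv: "u \<in> W" "v \<in> W" "u \<noteq> c" "v \<noteq> c" "u \<noteq> v" "dg W H u = 4" "dg W H v = 4"
    using two_full_5[OF assms] by blast
  have "card (W - {u, v, c}) = 2" using assms uv by (simp add: card_Diff_subset)
  then obtain a1 a2 where aa: "W - {u,v,c} = {a1,a2}" "a1 \<noteq> a2"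
    by (auto simp: card_2_iff)
  have fu: "\<And>y. y \<in> W \<Longrightarrow> y \<noteq> u \<Longrightarrow> H u y" using dg_full[OF assms(1,3) uv(1)] uv assms(2) by simp
  have fv: "\<And>y. y \<in> W \<Longrightarrow> y \<noteq> v \<Longrightarrow> H v y" using dg_full[OF assms(1,3) uv(2)] uv assms(2) by simp
  have a: "a1 \<in> W" "a2 \<in> W" "a1 \<notin> {u,v,c}" "a2 \<notin> {u,v,c}" using aa by blast+
  have Weq: "W = {c,u,v,a1,a2}" using aa uv assms(5) by blast
  show ?thesis
  proof (cases "H a1 a2")
    case True
    have "copy H u v a1 a2 c" unfolding copy_def using fu fv uv a aa(2) assms(5) by auto
    moreover have "(a1,a2) \<notin> set (cpl u v a1 a2 c)" using a uv by (auto simp: cpl_def)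
    ultimately show ?thesis using True a by blast
  next
    case False
    have d1: "dg W H a1 \<le> 3" using dg_non1[OF assms(1,3) a(1) a(2)] False aa assms(2) by simp
    have "\<not> H a2 a1" using False sgS[OF assms(3), of a2 a1] by blast
    hence d2: "dg W H a2 \<le> 3" using dg_non1[OF assms(1,3) a(2) a(1)] aa assms(2) by simp
    have "(\<Sum>y\<in>W. dg W H y) = (\<Sum>y\<in>{c,u,v,a1,a2}. dg W H y)"
      by (rule arg_cong[where f="sum (dg W H)"]) (rule Weq)
    also have "\<dots> = dg W H c + dg W H u + dg W H v + dg W H a1 + dg W H a2"
    proof -
      have "c \<notin> {u,v,a1,a2}" "u \<notin> {v,a1,a2}" "v \<notin> {a1,a2}" "a1 \<notin> {a2}" using uv a aa by auto
      thus ?thesis by (simp add: add.assoc)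
    qed
    finally have "(\<Sum>y\<in>W. dg W H y) = dg W H c + dg W H u + dg W H v + dg W H a1 + dg W H a2" .
    hence "dg W H c \<ge> 4" using assms(4) d1 d2 uv by linarith
    moreover have "dg W H c \<le> 4" using dg_le[OF assms(1,3,5)] assms(2) by simp
    ultimately have "dg W H c = card W - 1" using assms(2) by simp
    hence fc: "\<And>y. y \<in> W \<Longrightarrow> y \<noteq> c \<Longrightarrow> H c y" using dg_full[OF assms(1,3,5)] by simp
    have "copy H u c v a1 a2" unfolding copy_def using fu fc uv a aa(2) assms(5) by auto
    moreover have "(v,a1) \<notin> set (cpl u c v a1 a2)" using a uv by (auto simp: cpl_def)
    ultimately show ?thesis using fv[of a1] a uv by blast
  qed
qed

lemma liftC: assumes "finite W" "card W = m" "5 \<le> m" "sg W H" "4*m - 2 \<le> (\<Sum>y\<in>W. dg W H y)"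
  "book H" "c \<in> W"
  shows "\<exists>u v a b c' p q. copy H u v a b c' \<and> H p q \<and> p \<noteq> c \<and> q \<noteq> c \<and> (p,q) \<notin> set (cpl u v a b c')"
proof (cases "m = 5")
  case True thus ?thesis using liftC5[of W H c] assms by simp
next
  case False thus ?thesis using liftC6[OF assms(1,2) _ assms(4-7)] assms(3) by simp
qed



definition sw :: "nat \<Rightarrow> nat \<Rightarrow> nat \<Rightarrow> nat \<Rightarrow> (nat \<Rightarrow> nat \<Rightarrow> bool) \<Rightarrow> nat \<Rightarrow> nat \<Rightarrow> bool" where
  "sw a b c d E = adde a c (adde b d (dele a b (dele c d E)))"

lemma sw_iff: "sw a b c d E i j \<longleftrightarrow> (E i j \<and> \<not>(i=a\<and>j=b) \<and> \<not>(i=b\<and>j=a) \<and> \<not>(i=c\<and>j=d) \<and> \<not>(i=d\<and>j=c))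
   \<or> (i=a\<and>j=c) \<or> (i=c\<and>j=a) \<or> (i=b\<and>j=d) \<or> (i=d\<and>j=b)"
  unfolding sw_def adde_def dele_def by blast

lemma sw_props: assumes "finite V" "sg V E" "E a b" "E c d" "\<not> E a c" "\<not> E b d" "distinct [a,b,c,d]"
  shows "sg V (sw a b c d E) \<and> (\<forall>y\<in>V. dg V (sw a b c d E) y = dg V E y)"
proof -
  have inV: "a \<in> V" "b \<in> V" "c \<in> V" "d \<in> V" using sgD[OF assms(2)] assms(3,4) by blast+
  let ?E1 = "dele c d E" let ?E2 = "dele a b ?E1" let ?E3 = "adde b d ?E2"
  have s1: "sg V ?E1" by (rule sg_dele[OF assms(2)])
  have s2: "sg V ?E2" by (rule sg_dele[OF s1])
  have s3: "sg V ?E3" using sg_adde[OF s2] inV assms(7) by simp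
  have s4: "sg V (sw a b c d E)" unfolding sw_def using sg_adde[OF s3] inV assms(7) by simp
  have e1: "?E1 a b" using assms(3,7) by (auto simp: dele_def)
  have e2: "\<not> ?E2 b d" using assms(6) by (simp add: dele_def)
  have e3: "\<not> ?E3 a c" using assms(5,7) by (auto simp: dele_def adde_def)
  have pa: "1 \<le> dg V E a" "1 \<le> dg V E b" "1 \<le> dg V E c" "1 \<le> dg V E d"
    using dg_pos[OF assms(1,2)] assms(3,4) sgS[OF assms(2) assms(3)] sgS[OF assms(2) assms(4)] by blast+
  have "dg V (sw a b c d E) y = dg V E y" if "y \<in> V" for y
  proof -
    have "dg V (sw a b c d E) y = dg V ?E3 y + (if y = a \<or> y = c then 1 else 0)"
      unfolding sw_def using dg_adde[OF s3 inV(1) inV(3) _ e3 assms(1)] assms(7) by simp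
    also have "dg V ?E3 y = dg V ?E2 y + (if y = b \<or> y = d then 1 else 0)"
      using dg_adde[OF s2 inV(2) inV(4) _ e2 assms(1)] assms(7) by simp
    also have "dg V ?E2 y = dg V ?E1 y - (if y = a \<or> y = b then 1 else 0)"
      using dg_dele[OF s1 e1 assms(1)] by simp
    also have "dg V ?E1 y = dg V E y - (if y = c \<or> y = d then 1 else 0)"
      using dg_dele[OF assms(2,4,1)] by simp
    finally show ?thesis using pa assms(7) by auto
  qed
  thus ?thesis using s4 by blast
qed

lemma ins3: assumes "finite W" "sg W F" "x \<notin> W" "F p q" "c \<in> W" "c \<noteq> p" "c \<noteq> q"
  shows "sg (insert x W) (addv x {p,q,c} (dele p q F))
     \<and> (\<forall>y\<in>W. dg (insert x W) (addv x {p,q,c} (dele p q F)) y = dg W F y + (if y = c then 1 else 0))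
     \<and> dg (insert x W) (addv x {p,q,c} (dele p q F)) x = 3"
proof -
  have pq: "p \<in> W" "q \<in> W" "p \<noteq> q" using sgD[OF assms(2)] assms(4) by blast+
  have T: "{p,q,c} \<subseteq> W" using pq assms(5) by auto
  have s1: "sg W (dele p q F)" by (rule sg_dele[OF assms(2)])
  have s2: "sg (insert x W) (addv x {p,q,c} (dele p q F))" by (rule sg_addv[OF s1 assms(3) T])
  have pp: "1 \<le> dg W F p" "1 \<le> dg W F q" using dg_pos[OF assms(1,2)] assms(4) sgS[OF assms(2) assms(4)] by blast+
  have "dg (insert x W) (addv x {p,q,c} (dele p q F)) y = dg W F y + (if y = c then 1 else 0)" if "y \<in> W" for y
  proof -
    have "dg (insert x W) (addv x {p,q,c} (dele p q F)) y = dg W (dele p q F) y + (if y \<in> {p,q,c} then 1 else 0)"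
      by (rule dg_addv[OF s1 assms(3) T assms(1) that])
    also have "dg W (dele p q F) y = dg W F y - (if y = p \<or> y = q then 1 else 0)"
      by (rule dg_dele[OF assms(2,4,1)])
    finally show ?thesis using pp assms(6,7) by auto
  qed
  moreover have "dg (insert x W) (addv x {p,q,c} (dele p q F)) x = 3"
    using dg_addv_x[OF s1 assms(3) T] pq assms(6,7) by simp
  ultimately show ?thesis using s2 by blast
qed

definition good :: "nat \<Rightarrow> bool" where
  "good m \<longleftrightarrow> (\<forall>W H. finite W \<longrightarrow> card W = m \<longrightarrow> sg W H \<longrightarrow> 4*m - 2 \<le> (\<Sum>y\<in>W. dg W H y) \<longrightarrow>
      pot W H \<or> (m = 6 \<and> (\<forall>y\<in>W. dg W H y = 4)))"

definition oct :: "nat set \<Rightarrow> (nat \<Rightarrow> nat \<Rightarrow> bool) \<Rightarrow> bool" where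
  "oct W H \<longleftrightarrow> finite W \<and> card W = 6 \<and> sg W H \<and> (\<forall>y\<in>W. dg W H y = 4)"

definition anti :: "nat set \<Rightarrow> (nat \<Rightarrow> nat \<Rightarrow> bool) \<Rightarrow> nat \<Rightarrow> nat" where
  "anti W H s = (SOME t. t \<in> W \<and> t \<noteq> s \<and> \<not> H s t)"

lemma oct_anti: assumes "oct W H" "s \<in> W"
  shows "anti W H s \<in> W \<and> anti W H s \<noteq> s \<and> \<not> H s (anti W H s) \<and>
         (\<forall>t\<in>W. t \<noteq> s \<longrightarrow> \<not> H s t \<longrightarrow> t = anti W H s)"
proof -
  have f: "finite W" "card W = 6" "sg W H" "dg W H s = 4" using assms unfolding oct_def by auto
  have ex: "\<exists>t. t \<in> W \<and> t \<noteq> s \<and> \<not> H s t"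
  proof (rule ccontr)
    assume "\<not> ?thesis"
    hence "{y\<in>W. H s y} = W - {s}" using sgD[OF f(3)] by blast
    hence "dg W H s = 5" using f assms(2) by (simp add: dg_def)
    thus False using f by simp
  qed
  hence a: "anti W H s \<in> W \<and> anti W H s \<noteq> s \<and> \<not> H s (anti W H s)"
    unfolding anti_def by (rule someI_ex)
  have "t = anti W H s" if "t \<in> W" "t \<noteq> s" "\<not> H s t" for t
  proof (rule ccontr)
    assume "t \<noteq> anti W H s"
    hence "dg W H s \<le> card W - 3" using dg_non2[OF f(1,3) assms(2) that(1,2,3)] a by blast
    thus False using f by simp
  qed
  thus ?thesis using a by blast
qed

lemma oct_adj: assumes "oct W H" "s \<in> W" "t \<in> W"
  shows "H s t \<longleftrightarrow> s \<noteq> t \<and> t \<noteq> anti W H s"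
proof -
  have "sg W H" using assms unfolding oct_def by auto
  thus ?thesis using oct_anti[OF assms(1,2)] assms(3) sgD by metis
qed

lemma oct_aa: assumes "oct W H" "s \<in> W" shows "anti W H (anti W H s) = s"
proof -
  have sgH: "sg W H" using assms unfolding oct_def by auto
  have a: "anti W H s \<in> W" "anti W H s \<noteq> s" "\<not> H s (anti W H s)" using oct_anti[OF assms] by auto
  have "\<not> H (anti W H s) s" using a(3) sgS[OF sgH] by blast
  thus ?thesis using oct_anti[OF assms(1) a(1)] a(2) assms(2) by metis
qed

lemma oct_anti_in: "oct W H \<Longrightarrow> s \<in> W \<Longrightarrow> anti W H s \<in> W"
  using oct_anti by blast

lemma oct_anti_ne: "oct W H \<Longrightarrow> s \<in> W \<Longrightarrow> anti W H s \<noteq> s"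
  using oct_anti by blast

lemma oct_anti_inj: "oct W H \<Longrightarrow> s \<in> W \<Longrightarrow> t \<in> W \<Longrightarrow> anti W H s = anti W H t \<Longrightarrow> s = t"
  using oct_aa by metis

lemma two_out: assumes "finite W" "card W = 6" "A \<subseteq> W" "card A \<le> 4"
  shows "\<exists>r1 r2. r1 \<in> W - A \<and> r2 \<in> W - A \<and> r1 \<noteq> r2"
proof -
  have "card (W - A) \<ge> 2" using assms card_Diff_subset[of A W] finite_subset[OF assms(3,1)] by simp
  then obtain r1 where r1: "r1 \<in> W - A" by (metis card.empty all_not_in_conv not_numeral_le_zero)
  have "card (W - A - {r1}) \<ge> 1" using r1 \<open>card (W - A) \<ge> 2\<close> assms(1) by (simp add: card_Diff_singleton)
  then obtain r2 where "r2 \<in> W - A - {r1}" by (metis card.empty all_not_in_conv not_one_le_zero)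
  thus ?thesis using r1 by blast
qed

lemma card4_le: "card {a,b,c,d::nat} \<le> 4"
  using card_length[of "[a,b,c,d]"] by simp



lemma stepC: assumes IH: "good m" and cV: "finite V" "card V = Suc m" "5 \<le> m" and sgE: "sg V E"
  and x: "x \<in> V" and abc: "distinct [a,b,c]" "{y\<in>V. E x y} = {a,b,c}" "\<not> E a b"
  and S: "4 * Suc m - 2 \<le> (\<Sum>y\<in>V. dg V E y)"
  shows "pot V E"
proof -
  define W where "W = V - {x}"
  define G where "G = adde a b (delv x E)"
  have fW: "finite W" and cW: "card W = m" and xW: "x \<notin> W" and VW: "V = insert x W"
    using cV x by (auto simp: W_def)
  have Exa: "E x a" "E x b" "E x c" and inV: "a \<in> V" "b \<in> V" "c \<in> V" using abc(2) by blast+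
  have ne: "a \<noteq> x" "b \<noteq> x" "c \<noteq> x" using Exa sgD(4)[OF sgE] by metis+
  have inW: "a \<in> W" "b \<in> W" "c \<in> W" using inV ne by (auto simp: W_def)
  have sgD0: "sg W (delv x E)" using sg_delv[OF sgE] W_def by simp
  have nab: "\<not> delv x E a b" using abc(3) by (simp add: delv_def)
  have sgG: "sg W G" unfolding G_def using sg_adde[OF sgD0 inW(1,2)] abc(1) by simp
  have Eyx: "E y x \<longleftrightarrow> y \<in> {a,b,c}" if "y \<in> V" for y
    using abc(2) sgS[OF sgE, of y x] sgS[OF sgE, of x y] that by blast
  have pos: "1 \<le> dg V E y" if "y \<in> {a,b,c}" for y
    using dg_pos[OF cV(1) sgE, of y x] Eyx[of y] inV that by blast
  have D: "dg V E y = dg W G y + (if y = c then 1 else 0)" if "y \<in> W" for y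
  proof -
    have yx: "y \<noteq> x" "y \<in> V" using that by (auto simp: W_def)
    have "dg W G y = dg W (delv x E) y + (if y = a \<or> y = b then 1 else 0)"
      unfolding G_def using dg_adde[OF sgD0 inW(1,2) _ nab fW] abc(1) by simp
    also have "dg W (delv x E) y = dg V E y - (if E y x then 1 else 0)"
      unfolding W_def by (rule dg_delv[OF sgE yx(1)])
    finally have "dg W G y = dg V E y - (if E y x then 1 else 0) + (if y = a \<or> y = b then 1 else 0)" .
    moreover have "(E y x) = (y \<in> {a,b,c})" using Eyx[OF yx(2)] .
    moreover have "y \<in> {a,b,c} \<Longrightarrow> 1 \<le> dg V E y" using pos by blast
    ultimately show ?thesis using abc(1) by auto
  qed
  have dx: "dg V E x = 3" using abc by (simp add: dg_def)
  have SV: "(\<Sum>y\<in>V. dg V E y) = 3 + (\<Sum>y\<in>W. dg W G y) + 1"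
  proof -
    have "(\<Sum>y\<in>V. dg V E y) = dg V E x + (\<Sum>y\<in>W. dg V E y)" using VW xW fW by simp
    also have "(\<Sum>y\<in>W. dg V E y) = (\<Sum>y\<in>W. dg W G y + (if y = c then 1 else 0))"
      using D by (rule sum.cong[OF refl])
    also have "\<dots> = (\<Sum>y\<in>W. dg W G y) + 1" using inW(3) fW by (simp add: sum.distrib)
    finally show ?thesis using dx by simp
  qed
  hence SW: "4*m - 2 \<le> (\<Sum>y\<in>W. dg W G y)" using S cV(3) by simp
  have "pot W G \<or> (m = 6 \<and> (\<forall>y\<in>W. dg W G y = 4))" using IH fW cW sgG SW unfolding good_def by blast
  thus ?thesis
  proof
    assume "pot W G"
    then obtain F where F: "sg W F" "\<forall>y\<in>W. dg W F y = dg W G y" "book F" unfolding pot_def by blast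
    have "(\<Sum>y\<in>W. dg W F y) = (\<Sum>y\<in>W. dg W G y)" using F(2) by simp
    hence SF: "4*m - 2 \<le> (\<Sum>y\<in>W. dg W F y)" using SW by simp
    obtain u v a' b' c' p q where L: "copy F u v a' b' c'" "F p q" "p \<noteq> c" "q \<noteq> c"
        "(p,q) \<notin> set (cpl u v a' b' c')"
      using liftC[OF fW cW cV(3) F(1) SF F(3) inW(3)] by blast
    let ?H = "addv x {p,q,c} (dele p q F)"
    have I: "sg (insert x W) ?H" "\<forall>y\<in>W. dg (insert x W) ?H y = dg W F y + (if y = c then 1 else 0)"
      "dg (insert x W) ?H x = 3"
      using ins3[OF fW F(1) xW L(2) inW(3)] L(3,4) by auto
    have "book ?H" using copy_book[OF copy_addv[OF copy_dele[OF L(1) L(5)]]] .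
    moreover have "\<forall>y\<in>V. dg V ?H y = dg V E y"
    proof
      fix y assume "y \<in> V"
      show "dg V ?H y = dg V E y"
      proof (cases "y = x")
        case True thus ?thesis using I(3) dx VW by simp
      next
        case False
        hence "y \<in> W" using \<open>y \<in> V\<close> by (simp add: W_def)
        thus ?thesis using I(2) F(2) D VW by simp
      qed
    qed
    ultimately show "pot V E" unfolding pot_def using I(1) VW by blast
  next
    assume m6: "m = 6 \<and> (\<forall>y\<in>W. dg W G y = 4)"
    have O: "oct W G" unfolding oct_def using fW cW sgG m6 by auto
    define c' where "c' = anti W G c"
    have c': "c' \<in> W" "c' \<noteq> c" using oct_anti[OF O inW(3)] unfolding c'_def by auto
    obtain p where p: "p \<in> W" "p \<noteq> c" "p \<noteq> c'"
      using two_out[of W "{c,c'}"] fW cW m6 c' inW(3) by (auto simp: card_insert_if)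
    define p' where "p' = anti W G p"
    have p': "p' \<in> W" "p' \<noteq> p" using oct_anti[OF O p(1)] unfolding p'_def by auto
    have ac: "anti W G c' = c" using oct_aa[OF O inW(3)] unfolding c'_def by simp
    have Gcp: "G c p" using oct_adj[OF O inW(3) p(1)] p unfolding c'_def by simp
    have "p' \<noteq> c'"
    proof
      assume "p' = c'"
      hence "anti W G p' = anti W G c'" by simp
      hence "p = c" using oct_aa[OF O p(1)] ac unfolding p'_def by simp
      thus False using p by simp
    qed
    hence Gpc': "G p c'" using oct_adj[OF O p(1) c'(1)] p unfolding p'_def by simp
    have "p' \<noteq> c" using oct_adj[OF O p(1) inW(3)] Gcp sgS[OF sgG Gcp] unfolding p'_def by blast
    have A: "{c,c',p,p'} \<subseteq> W" using inW c' p p' by auto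
    obtain r1 r2 where r: "r1 \<in> W - {c,c',p,p'}" "r2 \<in> W - {c,c',p,p'}" "r1 \<noteq> r2"
      using two_out[OF fW _ A card4_le] cW m6 by auto
    have Gr: "G c r1" "G c r2" "G p r1" "G p r2"
      using oct_adj[OF O inW(3), of r1] oct_adj[OF O inW(3), of r2] oct_adj[OF O p(1), of r1]
        oct_adj[OF O p(1), of r2] r unfolding c'_def p'_def by auto
    let ?H = "addv x {p,c',c} (dele p c' G)"
    have I: "sg (insert x W) ?H" "\<forall>y\<in>W. dg (insert x W) ?H y = dg W G y + (if y = c then 1 else 0)"
      "dg (insert x W) ?H x = 3"
      using ins3[OF fW sgG xW Gpc' inW(3)] p c' by auto
    have "copy ?H c p r1 r2 x"
      unfolding copy_def addv_def dele_def using Gcp Gr r p c' xW inW(3) by auto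
    hence "book ?H" by (rule copy_book)
    moreover have "\<forall>y\<in>V. dg V ?H y = dg V E y"
    proof
      fix y assume "y \<in> V"
      show "dg V ?H y = dg V E y"
      proof (cases "y = x")
        case True thus ?thesis using I(3) dx VW by simp
      next
        case False
        hence "y \<in> W" using \<open>y \<in> V\<close> by (simp add: W_def)
        thus ?thesis using I(2) D VW by simp
      qed
    qed
    ultimately show "pot V E" unfolding pot_def using I(1) VW by blast
  qed
qed



lemma stepA: assumes IH: "good m" and cV: "finite V" "card V = Suc m" "5 \<le> m" and sgE: "sg V E"
  and x: "x \<in> V" and S: "2 * dg V E x + 4 * Suc m - 6 \<le> (\<Sum>y\<in>V. dg V E y)"
  and S0: "4 * Suc m - 2 \<le> (\<Sum>y\<in>V. dg V E y)" and nb: "\<not> book E"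
  shows "pot V E"
proof -
  define W where "W = V - {x}"
  define G where "G = delv x E"
  have fW: "finite W" and cW: "card W = m" and xW: "x \<notin> W" and VW: "V = insert x W"
    using cV x by (auto simp: W_def)
  have sgG: "sg W G" using sg_delv[OF sgE] by (simp add: W_def G_def)
  have SS: "(\<Sum>y\<in>W. dg W G y) + 2 * dg V E x = (\<Sum>y\<in>V. dg V E y)"
    using sum_delv[OF cV(1) sgE x] by (simp add: W_def G_def)
  hence SW: "4*m - 2 \<le> (\<Sum>y\<in>W. dg W G y)" using S cV(3) by simp
  have GE: "G s t \<longleftrightarrow> E s t" if "s \<in> W" "t \<in> W" for s t using that xW by (auto simp: G_def delv_def)
  have dGW: "dg W G y = dg V E y - (if E y x then 1 else 0)" if "y \<in> W" for y
    using dg_delv[OF sgE, of y x] that xW unfolding W_def G_def by auto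
  have "pot W G \<or> (m = 6 \<and> (\<forall>y\<in>W. dg W G y = 4))" using IH fW cW sgG SW unfolding good_def by blast
  thus ?thesis
  proof
    assume "pot W G"
    then obtain F where F: "sg W F" "\<forall>y\<in>W. dg W F y = dg W G y" "book F" unfolding pot_def by blast
    define T where "T = {y\<in>W. E x y}"
    let ?H = "addv x T F"
    have TW: "T \<subseteq> W" by (auto simp: T_def)
    have sgH: "sg V ?H" using sg_addv[OF F(1) xW TW] VW by simp
    have "book ?H" using book_mono[OF F(3)] by (auto simp: addv_def)
    moreover have "\<forall>y\<in>V. dg V ?H y = dg V E y"
    proof
      fix y assume "y \<in> V"
      show "dg V ?H y = dg V E y"
      proof (cases "y = x")
        case True
        have "{z\<in>V. E x z} = T" using sgD(3)[OF sgE, of x] by (auto simp: T_def W_def)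
        thus ?thesis using True dg_addv_x[OF F(1) xW TW] VW by (simp add: dg_def)
      next
        case False
        hence yW: "y \<in> W" using \<open>y \<in> V\<close> by (simp add: W_def)
        have "dg V ?H y = dg W F y + (if y \<in> T then 1 else 0)"
          using dg_addv[OF F(1) xW TW fW yW] VW by simp
        also have "\<dots> = dg V E y - (if E y x then 1 else 0) + (if y \<in> T then 1 else 0)"
          using F(2) dGW yW by simp
        also have "(y \<in> T) = E y x" using sgS[OF sgE, of y x] sgS[OF sgE, of x y] yW by (auto simp: T_def)
        moreover have "E y x \<Longrightarrow> 1 \<le> dg V E y" using dg_pos[OF cV(1) sgE] by blast
        ultimately show ?thesis by auto
      qed
    qed
    ultimately show ?thesis unfolding pot_def using sgH by blast
  next
    assume m6: "m = 6 \<and> (\<forall>y\<in>W. dg W G y = 4)"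
    have O: "oct W G" unfolding oct_def using fW cW sgG m6 by auto
    have "(\<Sum>y\<in>W. dg W G y) = 24" using m6 cW by simp
    hence "dg V E x \<ge> 1" using SS S0 m6 by simp
    hence "{z\<in>V. E x z} \<noteq> {}" unfolding dg_def by (metis card.empty not_one_le_zero)
    then obtain y where y0: "y \<in> V" "E x y" by blast
    have yW: "y \<in> W" using y0 sgD(4)[OF sgE] by (auto simp: W_def)
    define y' where "y' = anti W G y"
    have adj: "E s t \<longleftrightarrow> s \<noteq> t \<and> t \<noteq> anti W G s" if "s \<in> W" "t \<in> W" for s t
      using oct_adj[OF O that] GE[OF that] by simp
    have aa: "anti W G (anti W G s) = s" if "s \<in> W" for s using oct_aa[OF O that] .
    have ain: "anti W G s \<in> W" "anti W G s \<noteq> s" if "s \<in> W" for s using oct_anti[OF O that] by auto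
    have y': "y' \<in> W" "y' \<noteq> y" using ain[OF yW] by (auto simp: y'_def)
    have Tsub: "z = y \<or> z = y'" if "z \<in> V" "E x z" for z
    proof (rule ccontr)
      assume nz: "\<not> (z = y \<or> z = y')"
      have zW: "z \<in> W" using that sgD(4)[OF sgE] by (auto simp: W_def)
      have Eyz: "E y z" using adj[OF yW zW] nz by (auto simp: y'_def)
      define z' where "z' = anti W G z"
      have z': "z' \<in> W" using ain[OF zW] by (simp add: z'_def)
      have A: "{y,z,y',z'} \<subseteq> W" using yW zW y' z' by auto
      obtain r1 r2 where r: "r1 \<in> W - {y,z,y',z'}" "r2 \<in> W - {y,z,y',z'}" "r1 \<noteq> r2"
        using two_out[OF fW _ A card4_le] cW m6 by auto
      have Er: "E y r1" "E y r2" "E z r1" "E z r2"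
        using adj[OF yW, of r1] adj[OF yW, of r2] adj[OF zW, of r1] adj[OF zW, of r2] r
        unfolding y'_def z'_def by auto
      have Ex: "E y x" "E z x" using sgS[OF sgE] y0(2) that(2) by blast+
      have "copy E y z x r1 r2" unfolding copy_def using Eyz Er Ex r nz xW yW zW by auto
      thus False using nb copy_book by blast
    qed
    obtain p r0 where p: "p \<in> W - {y,y'}" using two_out[of W "{y,y'}"] fW cW m6 yW y' by (auto simp: card_insert_if)
    have pW: "p \<in> W" "p \<noteq> y" "p \<noteq> y'" using p by auto
    define p' where "p' = anti W G p"
    have p': "p' \<in> W" "p' \<noteq> p" using ain[OF pW(1)] by (auto simp: p'_def)
    have nxp: "\<not> E x p" using Tsub[of p] pW VW by blast
    have "y' \<noteq> anti W G p"
    proof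
      assume "y' = anti W G p"
      hence "anti W G y' = anti W G (anti W G p)" by simp
      hence "y = p" using aa[OF yW] aa[OF pW(1)] unfolding y'_def by simp
      thus False using pW by simp
    qed
    hence Epy': "E p y'" using adj[OF pW(1) y'(1)] pW by simp
    have nyy': "\<not> E y y'" using adj[OF yW y'(1)] by (simp add: y'_def)
    have d4: "distinct [x,y,p,y']" using xW yW pW y' by auto
    have SWP: "sg V (sw x y p y' E) \<and> (\<forall>z\<in>V. dg V (sw x y p y' E) z = dg V E z)"
      by (rule sw_props[OF cV(1) sgE y0(2) Epy' nxp nyy' d4])
    have p'y: "p' \<noteq> y" "p' \<noteq> y'"
    proof -
      show "p' \<noteq> y"
      proof
        assume "p' = y" hence "p = y'" using aa[OF pW(1)] unfolding p'_def y'_def by metis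
        thus False using pW by simp
      qed
      show "p' \<noteq> y'"
      proof
        assume "p' = y'" hence "p = y" using aa[OF pW(1)] aa[OF yW] unfolding p'_def y'_def by metis
        thus False using pW by simp
      qed
    qed
    have A: "{y,y',p,p'} \<subseteq> W" using yW y' pW p' by auto
    obtain r where r: "r \<in> W - {y,y',p,p'}"
      using two_out[OF fW _ A card4_le] cW m6 by auto
    have rW: "r \<in> W" using r by auto
    have rn: "r \<noteq> y" "r \<noteq> y'" "r \<noteq> p" "r \<noteq> p'" using r by auto
    have ar: "anti W G r \<noteq> y'" "anti W G r \<noteq> p" "anti W G r \<noteq> p'"
    proof -
      show "anti W G r \<noteq> y'" using aa[OF rW] aa[OF yW] rn(1) unfolding y'_def by metis
      show "anti W G r \<noteq> p" using aa[OF rW] rn(4) unfolding p'_def by metis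
      show "anti W G r \<noteq> p'" using aa[OF rW] aa[OF pW(1)] rn(3) unfolding p'_def by metis
    qed
    have E1: "E y r" "E y p" "E y p'" "E r y'" "E r p" "E r p'"
      using adj[OF yW rW] adj[OF yW pW(1)] adj[OF yW p'(1)] adj[OF rW y'(1)] adj[OF rW pW(1)]
        adj[OF rW p'(1)] r pW p'y p' ar unfolding y'_def by auto
    have "copy (sw x y p y' E) y r y' p p'"
      unfolding copy_def sw_iff using E1 r pW p'y p' y' xW yW rW by auto
    hence "pot V (sw x y p y' E)" using SWP pot_self copy_book by blast
    thus ?thesis using pot_trans SWP by blast
  qed
qed



lemma stepII: assumes IH: "good m" and cV: "finite V" "card V = Suc m" "5 \<le> m" and sgE: "sg V E"
  and x: "x \<in> V" "dg V E x = 3" and S0: "4 * Suc m - 2 \<le> (\<Sum>y\<in>V. dg V E y)"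
  and mind: "\<forall>y\<in>V. 3 \<le> dg V E y" and nb: "\<not> book E"
  shows "pot V E"
proof -
  obtain a b c where abc0: "{y\<in>V. E x y} = {a,b,c}" "a \<noteq> b" "b \<noteq> c" "a \<noteq> c"
    using x(2) unfolding dg_def card_3_iff by blast
  have E1: "E x a" "E x b" "E x c" and inV: "a \<in> V" "b \<in> V" "c \<in> V" using abc0(1) by blast+
  have ne: "a \<noteq> x" "b \<noteq> x" "c \<noteq> x" using E1 sgD(4)[OF sgE] by metis+
  have C: "pot V E" if "distinct [s,t,u]" "{y\<in>V. E x y} = {s,t,u}" "\<not> E s t" for s t u
    using stepC[OF IH cV sgE x(1) that S0] .
  show ?thesis
  proof (cases "E a b \<and> E a c \<and> E b c")
    case False
    show ?thesis
    proof (cases "E a b")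
      case False thus ?thesis using C[of a b c] abc0 by auto
    next
      case True
      show ?thesis
      proof (cases "E a c")
        case False
        have "{y\<in>V. E x y} = {a,c,b}" using abc0(1) by auto
        thus ?thesis using C[of a c b] abc0 False by auto
      next
        case True
        hence "\<not> E b c" using \<open>E a b\<close> \<open>\<not> (E a b \<and> E a c \<and> E b c)\<close> by blast
        have "{y\<in>V. E x y} = {b,c,a}" using abc0(1) by auto
        thus ?thesis using C[of b c a] abc0 \<open>\<not> E b c\<close> by auto
      qed
    qed
  next
    case True
    hence K: "E a b" "E a c" "E b c" by auto
    have K': "E b a" "E c a" "E c b" "E a x" "E b x" "E c x" using K E1 sgS[OF sgE] by blast+
    define Ou where "Ou = V - {x,a,b,c}"
    have Osub: "{x,a,b,c} \<subseteq> V" using x inV by auto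
    have "card Ou = Suc m - card {x,a,b,c}" unfolding Ou_def using card_Diff_subset[OF _ Osub] cV by auto
    moreover have "card {x,a,b,c} \<le> 4" by (rule card4_le)
    ultimately have "card Ou \<ge> 2" using cV(3) by linarith
    then obtain y where yO: "y \<in> Ou" by (metis card.empty all_not_in_conv not_numeral_le_zero)
    have excl: "\<not> (E z a \<and> E z b)" "\<not> (E z a \<and> E z c)" "\<not> (E z b \<and> E z c)" if "z \<in> Ou" for z
    proof -
      have zz: "z \<noteq> x" "z \<noteq> a" "z \<noteq> b" "z \<noteq> c" using that by (auto simp: Ou_def)
      show "\<not> (E z a \<and> E z b)"
      proof
        assume h: "E z a \<and> E z b"
        hence "E a z" "E b z" using sgS[OF sgE] by blast+
        hence "copy E a b x c z" unfolding copy_def using K K' zz ne abc0 by auto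
        thus False using nb copy_book by blast
      qed
      show "\<not> (E z a \<and> E z c)"
      proof
        assume h: "E z a \<and> E z c"
        hence "E a z" "E c z" using sgS[OF sgE] by blast+
        hence "copy E a c x b z" unfolding copy_def using K K' zz ne abc0 by auto
        thus False using nb copy_book by blast
      qed
      show "\<not> (E z b \<and> E z c)"
      proof
        assume h: "E z b \<and> E z c"
        hence "E b z" "E c z" using sgS[OF sgE] by blast+
        hence "copy E b c x a z" unfolding copy_def using K K' zz ne abc0 by auto
        thus False using nb copy_book by blast
      qed
    qed
    have yV: "y \<in> V" and yn: "y \<noteq> x" "y \<noteq> a" "y \<noteq> b" "y \<noteq> c" using yO by (auto simp: Ou_def)
    have nxy: "\<not> E y x" using yn abc0(1) sgS[OF sgE, of y x] yV by blast
    obtain w where w: "w \<in> Ou" "E y w"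
    proof (rule ccontr)
      assume nw: "\<not> thesis"
      have Nsub: "{z\<in>V. E y z} \<subseteq> {a,b,c}"
      proof
        fix z assume z: "z \<in> {z\<in>V. E y z}"
        hence "z \<notin> Ou" using nw that by blast
        moreover have "z \<noteq> x" using z nxy by auto
        ultimately show "z \<in> {a,b,c}" using z by (auto simp: Ou_def)
      qed
      have "card {z\<in>V. E y z} \<le> 1"
      proof -
        have ex: "\<not> (E y a \<and> E y b)" "\<not> (E y a \<and> E y c)" "\<not> (E y b \<and> E y c)" using excl[OF yO] by auto
        have "{z\<in>V. E y z} \<subseteq> {a} \<or> {z\<in>V. E y z} \<subseteq> {b} \<or> {z\<in>V. E y z} \<subseteq> {c}"
          using Nsub ex by blast
        thus ?thesis by (metis card.empty card_mono card_0_eq finite.emptyI finite.insertI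
              le_Suc_eq One_nat_def card.insert empty_iff insert_absorb)
      qed
      moreover have "3 \<le> card {z\<in>V. E y z}" using mind yV by (simp add: dg_def)
      ultimately show False by linarith
    qed
    have wV: "w \<in> V" and wn: "w \<noteq> x" "w \<noteq> a" "w \<noteq> b" "w \<noteq> c" using w(1) by (auto simp: Ou_def)
    have yw: "y \<noteq> w" using w(2) sgD(4)[OF sgE] by blast
    have Sw: "pot V E" if st: "{s,t,u} = {a,b,c}" "distinct [s,t,u]" "\<not> E y s" "\<not> E w t" for s t u
    proof -
      have stu: "s \<in> {a,b,c}" "t \<in> {a,b,c}" "u \<in> {a,b,c}" using st(1) by auto
      have Est: "E s t" using stu st(2) K K' by auto
      have nsy: "\<not> E s y" using st(3) sgS[OF sgE, of s y] by blast
      have ntw: "\<not> E t w" using st(4) sgS[OF sgE, of t w] by blast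
      have d4: "distinct [s,t,y,w]" using stu st(2) yn wn yw by auto
      have SWP: "sg V (sw s t y w E) \<and> (\<forall>z\<in>V. dg V (sw s t y w E) z = dg V E z)"
        by (rule sw_props[OF cV(1) sgE Est w(2) nsy ntw d4])
      have xs: "x \<noteq> s" "x \<noteq> t" "x \<noteq> y" "x \<noteq> w" using stu ne yn wn by auto
      have N: "{z\<in>V. sw s t y w E x z} = {s,t,u}"
        using abc0(1) st(1) xs unfolding sw_iff by auto
      have nst: "\<not> sw s t y w E s t" unfolding sw_iff using d4 by auto
      have "(\<Sum>z\<in>V. dg V (sw s t y w E) z) = (\<Sum>z\<in>V. dg V E z)" using SWP by simp
      hence "pot V (sw s t y w E)"
        using stepC[OF IH cV _ x(1) st(2) N nst] SWP S0 by simp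
      thus ?thesis using pot_trans SWP by blast
    qed
    have ey: "\<not> (E y a \<and> E y b)" "\<not> (E y a \<and> E y c)" "\<not> (E y b \<and> E y c)" using excl[OF yO] by auto
    have ew: "\<not> (E w a \<and> E w b)" "\<not> (E w a \<and> E w c)" "\<not> (E w b \<and> E w c)" using excl[OF w(1)] by auto
    show ?thesis
    proof (cases "E y a")
      case False
      show ?thesis
      proof (cases "E w b")
        case False thus ?thesis using Sw[of a b c] \<open>\<not> E y a\<close> abc0 by auto
      next
        case True
        hence "\<not> E w c" using ew by blast
        moreover have "{a,c,b} = {a,b,c}" by auto
        ultimately show ?thesis using Sw[of a c b] \<open>\<not> E y a\<close> abc0 by auto
      qed
    next
      case True
      hence nyb: "\<not> E y b" using ey by blast
      show ?thesis
      proof (cases "E w a")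
        case False
        have "{b,a,c} = {a,b,c}" by auto
        thus ?thesis using Sw[of b a c] nyb False abc0 by auto
      next
        case True
        hence "\<not> E w c" using ew by blast
        moreover have "{b,c,a} = {a,b,c}" by auto
        ultimately show ?thesis using Sw[of b c a] nyb abc0 by auto
      qed
    qed
  qed
qed



lemma seven: assumes "finite V" "card V = 7"
  shows "\<exists>w0 w1 w2 w3 w4 w5 w6. distinct [w0,w1,w2,w3,w4,w5,w6] \<and> V = {w0,w1,w2,w3,w4,w5,w6}"
proof -
  obtain xs where xs: "set xs = V" "distinct xs" using finite_distinct_list[OF assms(1)] by blast
  have l: "length xs = 7" using distinct_card[OF xs(2)] xs(1) assms(2) by simp
  obtain w0 l0 where 0: "xs = w0 # l0" "length l0 = 6" using l by (cases xs) auto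
  obtain w1 l1 where 1: "l0 = w1 # l1" "length l1 = 5" using 0 by (cases l0) auto
  obtain w2 l2 where 2: "l1 = w2 # l2" "length l2 = 4" using 1 by (cases l1) auto
  obtain w3 l3 where 3: "l2 = w3 # l3" "length l3 = 3" using 2 by (cases l2) auto
  obtain w4 l4 where 4: "l3 = w4 # l4" "length l4 = 2" using 3 by (cases l3) auto
  obtain w5 l5 where 5: "l4 = w5 # l5" "length l5 = 1" using 4 by (cases l4) auto
  obtain w6 l6 where 6: "l5 = w6 # l6" "length l6 = 0" using 5 by (cases l5) auto
  have "xs = [w0,w1,w2,w3,w4,w5,w6]" using 0 1 2 3 4 5 6 by simp
  hence d: "distinct [w0,w1,w2,w3,w4,w5,w6]" and e: "V = {w0,w1,w2,w3,w4,w5,w6}" using xs by auto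
  show ?thesis by (intro exI conjI, rule d, rule e)
qed

definition base7 :: "nat set \<Rightarrow> nat \<Rightarrow> nat \<Rightarrow> nat \<Rightarrow> nat \<Rightarrow> nat \<Rightarrow> nat \<Rightarrow> nat \<Rightarrow> nat \<Rightarrow> nat \<Rightarrow> bool" where
  "base7 V w0 w1 w2 w3 w4 w5 w6 i j \<longleftrightarrow> i \<in> V \<and> j \<in> V \<and> i \<noteq> j \<and>
     \<not> (i \<in> {w0,w1,w2} \<and> j \<in> {w0,w1,w2}) \<and>
     \<not> ((i = w3 \<and> j = w4) \<or> (i = w4 \<and> j = w3) \<or> (i = w4 \<and> j = w5) \<or> (i = w5 \<and> j = w4) \<or>
        (i = w5 \<and> j = w6) \<or> (i = w6 \<and> j = w5) \<or> (i = w6 \<and> j = w3) \<or> (i = w3 \<and> j = w6))"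

lemma R4_base: assumes "finite V" "card V = 7"
  shows "\<exists>F u v a b c p q r s. sg V F \<and> (\<forall>y\<in>V. dg V F y = 4) \<and> copy F u v a b c \<and>
    distinct [p,q,r,s] \<and> F p q \<and> F q r \<and> F r s \<and> (p,q) \<notin> set (cpl u v a b c) \<and>
    (q,r) \<notin> set (cpl u v a b c) \<and> (r,s) \<notin> set (cpl u v a b c)"
proof -
  obtain w0 w1 w2 w3 w4 w5 w6 where w: "distinct [w0,w1,w2,w3,w4,w5,w6]" and V: "V = {w0,w1,w2,w3,w4,w5,w6}"
    using seven[OF assms] by blast
  let ?F = "base7 V w0 w1 w2 w3 w4 w5 w6"
  have sgF: "sg V ?F" unfolding sg_def base7_def by blast
  have n: "w0 \<noteq> w1" "w0 \<noteq> w2" "w0 \<noteq> w3" "w0 \<noteq> w4" "w0 \<noteq> w5" "w0 \<noteq> w6"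
    "w1 \<noteq> w2" "w1 \<noteq> w3" "w1 \<noteq> w4" "w1 \<noteq> w5" "w1 \<noteq> w6"
    "w2 \<noteq> w3" "w2 \<noteq> w4" "w2 \<noteq> w5" "w2 \<noteq> w6"
    "w3 \<noteq> w4" "w3 \<noteq> w5" "w3 \<noteq> w6" "w4 \<noteq> w5" "w4 \<noteq> w6" "w5 \<noteq> w6" using w by auto
  note n' = n n[symmetric]
  have N0: "{j\<in>V. ?F w0 j} = {w3,w4,w5,w6}" unfolding V base7_def using n' by auto
  have N1: "{j\<in>V. ?F w1 j} = {w3,w4,w5,w6}" unfolding V base7_def using n' by auto
  have N2: "{j\<in>V. ?F w2 j} = {w3,w4,w5,w6}" unfolding V base7_def using n' by auto
  have N3: "{j\<in>V. ?F w3 j} = {w0,w1,w2,w5}" unfolding V base7_def using n' by auto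
  have N4: "{j\<in>V. ?F w4 j} = {w0,w1,w2,w6}" unfolding V base7_def using n' by auto
  have N5: "{j\<in>V. ?F w5 j} = {w0,w1,w2,w3}" unfolding V base7_def using n' by auto
  have N6: "{j\<in>V. ?F w6 j} = {w0,w1,w2,w4}" unfolding V base7_def using n' by auto
  have D: "\<forall>y\<in>V. dg V ?F y = 4"
  proof
    fix y assume "y \<in> V"
    hence "y = w0 \<or> y = w1 \<or> y = w2 \<or> y = w3 \<or> y = w4 \<or> y = w5 \<or> y = w6" using V by blast
    thus "dg V ?F y = 4" unfolding dg_def using N0 N1 N2 N3 N4 N5 N6 n' by (elim disjE) simp_all
  qed
  have inV: "w0 \<in> V" "w1 \<in> V" "w2 \<in> V" "w3 \<in> V" "w4 \<in> V" "w5 \<in> V" "w6 \<in> V" using V by auto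
  have "copy ?F w3 w5 w0 w1 w2" unfolding copy_def base7_def using n' inV by auto
  moreover have "distinct [w0,w4,w1,w6]" "?F w0 w4" "?F w4 w1" "?F w1 w6" unfolding base7_def using n' inV by auto
  moreover have "(w0,w4) \<notin> set (cpl w3 w5 w0 w1 w2)" "(w4,w1) \<notin> set (cpl w3 w5 w0 w1 w2)"
     "(w1,w6) \<notin> set (cpl w3 w5 w0 w1 w2)" unfolding cpl_def using n' by auto
  ultimately show ?thesis using sgF D by blast
qed

lemma R4: "finite V \<Longrightarrow> card V = k + 7 \<Longrightarrow>
  \<exists>F u v a b c p q r s. sg V F \<and> (\<forall>y\<in>V. dg V F y = 4) \<and> copy F u v a b c \<and>
    distinct [p,q,r,s] \<and> F p q \<and> F q r \<and> F r s \<and> (p,q) \<notin> set (cpl u v a b c) \<and>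
    (q,r) \<notin> set (cpl u v a b c) \<and> (r,s) \<notin> set (cpl u v a b c)"
proof (induction k arbitrary: V)
  case 0 thus ?case using R4_base by simp
next
  case (Suc k)
  obtain x where x: "x \<in> V" using Suc.prems by fastforce
  define W where "W = V - {x}"
  have fW: "finite W" and cW: "card W = k + 7" and xW: "x \<notin> W" and VW: "V = insert x W"
    using Suc.prems x by (auto simp: W_def)
  obtain F u v a b c p q r s where F: "sg W F" "\<forall>y\<in>W. dg W F y = 4" "copy F u v a b c"
    "distinct [p,q,r,s]" "F p q" "F q r" "F r s" "(p,q) \<notin> set (cpl u v a b c)"
    "(q,r) \<notin> set (cpl u v a b c)" "(r,s) \<notin> set (cpl u v a b c)"
    using Suc.IH[OF fW cW] by blast
  have inW: "p \<in> W" "q \<in> W" "r \<in> W" "s \<in> W" using sgD[OF F(1)] F(5,7) by blast+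
  let ?F1 = "dele p q F"
  let ?F2 = "dele r s ?F1"
  let ?H = "addv x {p,q,r,s} ?F2"
  have T: "{p,q,r,s} \<subseteq> W" using inW by auto
  have s1: "sg W ?F1" by (rule sg_dele[OF F(1)])
  have s2: "sg W ?F2" by (rule sg_dele[OF s1])
  have e1: "?F1 r s" using F(4,7) by (auto simp: dele_def)
  have sH: "sg V ?H" using sg_addv[OF s2 xW T] VW by simp
  have pos: "1 \<le> dg W F p" "1 \<le> dg W F q" "1 \<le> dg W F r" "1 \<le> dg W F s" using F(2) inW by auto
  have "\<forall>y\<in>V. dg V ?H y = 4"
  proof
    fix y assume "y \<in> V"
    show "dg V ?H y = 4"
    proof (cases "y = x")
      case True
      thus ?thesis using dg_addv_x[OF s2 xW T] VW F(4) by simp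
    next
      case False
      hence yW: "y \<in> W" using \<open>y \<in> V\<close> VW by simp
      have "dg V ?H y = dg W ?F2 y + (if y \<in> {p,q,r,s} then 1 else 0)"
        using dg_addv[OF s2 xW T fW yW] VW by simp
      also have "dg W ?F2 y = dg W ?F1 y - (if y = r \<or> y = s then 1 else 0)"
        by (rule dg_dele[OF s1 e1 fW])
      also have "dg W ?F1 y = dg W F y - (if y = p \<or> y = q then 1 else 0)"
        by (rule dg_dele[OF F(1) F(5) fW])
      finally show ?thesis using F(2) yW F(4) by auto
    qed
  qed
  moreover have "copy ?H u v a b c"
    by (rule copy_addv[OF copy_dele[OF copy_dele[OF F(3) F(8)]]]) (use F(3,10) in \<open>auto simp: dele_def cpl_def\<close>)
  moreover have cin: "u \<in> W" "v \<in> W" "a \<in> W" "b \<in> W" "c \<in> W" using copy_in[OF F(1,3)] by auto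
  moreover have "distinct [p,x,q,r]" using F(4) xW inW by auto
  moreover have "?H p x" "?H x q" "?H q r" using F(4,6) by (auto simp: addv_def dele_def)
  moreover have "(p,x) \<notin> set (cpl u v a b c)" "(x,q) \<notin> set (cpl u v a b c)"
    using cin xW by (auto simp: cpl_def)
  ultimately show ?case using sH F(9) by blast
qed



lemma good5: "good 5"
  unfolding good_def
proof (intro allI impI)
  fix W H assume "finite W" "card W = 5" "sg W H" "4 * 5 - 2 \<le> (\<Sum>y\<in>W. dg W H y)"
  hence "book H" using base5 by simp
  thus "pot W H \<or> (5 = (6::nat) \<and> (\<forall>y\<in>W. dg W H y = 4))" using pot_self \<open>sg W H\<close> by blast
qed

lemma arith_bound: assumes "6 \<le> (n::nat)" "n * (S + 1) \<le> 2 * S + n * (4 * n - 6)"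
  shows "S \<le> 4 * n + 1"
proof (rule ccontr)
  assume "\<not> ?thesis"
  hence g: "4 * int n + 2 \<le> int S" by simp
  have "int (n * (S + 1)) \<le> int (2 * S + n * (4 * n - 6))" using assms(2) of_nat_le_iff by blast
  hence "int n * (int S + 1) \<le> 2 * int S + int n * int (4 * n - 6)"
    by (simp only: of_nat_mult of_nat_add of_nat_1 of_nat_numeral)
  moreover have "int (4*n-6) = 4*int n - 6" using assms(1) by simp
  ultimately have i: "int n * (int S + 1) \<le> 2 * int S + int n * (4 * int n - 6)" by simp
  have "0 \<le> (int n - 2) * (int S - (4 * int n + 2))" using g assms(1) by (intro mult_nonneg_nonneg) auto
  hence p: "0 \<le> int n * int S - 4 * (int n * int n) - 2 * int n - 2 * int S + 8 * int n + 4"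
    by (simp add: algebra_simps)
  have i': "int n * int S + int n \<le> 2 * int S + 4 * (int n * int n) - 6 * int n" using i by (simp add: algebra_simps)
  show False using p i' assms(1) by linarith
qed

lemma good_step: assumes IH: "good m" and m5: "5 \<le> m" shows "good (Suc m)"
  unfolding good_def
proof (intro allI impI)
  fix V E assume fV: "finite V" and cV: "card V = Suc m" and sgE: "sg V E"
    and S: "4 * Suc m - 2 \<le> (\<Sum>y\<in>V. dg V E y)"
  let ?S = "\<Sum>y\<in>V. dg V E y"
  let ?n = "Suc m"
  have n6: "6 \<le> ?n" using m5 by simp
  show "pot V E \<or> (Suc m = 6 \<and> (\<forall>y\<in>V. dg V E y = 4))"
  proof (cases "book E")
    case True thus ?thesis using pot_self sgE by blast
  next
    case nb: False
    show ?thesis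
    proof (cases "\<exists>x\<in>V. 2 * dg V E x + 4 * Suc m - 6 \<le> ?S")
      case True
      then obtain x where "x \<in> V" "2 * dg V E x + 4 * Suc m - 6 \<le> ?S" by blast
      thus ?thesis using stepA[OF IH fV cV m5 sgE _ _ S nb] by blast
    next
      case False
      have H: "?S + 1 \<le> 2 * dg V E x + (4 * ?n - 6)" if x: "x \<in> V" for x
      proof -
        have "\<not> (2 * dg V E x + 4 * ?n - 6 \<le> ?S)" using False x by blast
        thus ?thesis using m5 by linarith
      qed
      have "(\<Sum>x\<in>V. ?S + 1) \<le> (\<Sum>x\<in>V. 2 * dg V E x + (4 * ?n - 6))" by (rule sum_mono) (rule H)
      also have "\<dots> = 2 * ?S + card V * (4 * ?n - 6)" by (simp add: sum.distrib sum_distrib_left)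
      finally have ineq: "?n * (?S + 1) \<le> 2 * ?S + ?n * (4 * ?n - 6)" using cV by simp
      have le: "?S \<le> 4 * ?n + 1" by (rule arith_bound[OF _ ineq]) (use m5 in simp)
      have ev: "even ?S" by (rule even_sum[OF fV sgE])
      have cases: "?S = 4 * ?n - 2 \<or> ?S = 4 * ?n"
      proof -
        have "?S \<noteq> 4 * ?n - 1"
        proof
          assume "?S = 4 * ?n - 1"
          hence "even (4 * ?n - 1)" using ev by simp
          thus False by presburger
        qed
        moreover have "?S \<noteq> 4 * ?n + 1"
        proof
          assume "?S = 4 * ?n + 1"
          hence "even (4 * ?n + 1)" using ev by simp
          thus False by presburger
        qed
        ultimately show ?thesis using S le by linarith
      qed
      show ?thesis
      proof (cases "?S = 4 * ?n")
        case True
        have ge4: "4 \<le> dg V E x" if "x \<in> V" for x using H[OF that] True n6 by presburger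
        have all4: "dg V E y = 4" if yV: "y \<in> V" for y
        proof (rule ccontr)
          assume "dg V E y \<noteq> 4"
          hence "5 \<le> dg V E y" using ge4[OF yV] by simp
          moreover have "?S = dg V E y + (\<Sum>z\<in>V - {y}. dg V E z)" using fV yV by (simp add: sum.remove)
          moreover have "(\<Sum>z\<in>V - {y}. dg V E z) \<ge> (\<Sum>z\<in>V - {y}. 4)" by (rule sum_mono) (simp add: ge4)
          moreover have "(\<Sum>z\<in>V - {y}. (4::nat)) = 4 * m" using cV yV fV by simp
          moreover have "4 * Suc m = 4 * m + 4" by simp
          ultimately show False using True by linarith
        qed
        show ?thesis
        proof (cases "m = 5")
          case True thus ?thesis using all4 by simp
        next
          case False
          hence "card V = (m - 6) + 7" using cV m5 by simp
          then obtain F u v a b c where F: "sg V F" "\<forall>y\<in>V. dg V F y = 4" "copy F u v a b c"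
            using R4[OF fV] by blast
          have "pot V E" unfolding pot_def using F all4 copy_book by fastforce
          thus ?thesis by blast
        qed
      next
        case False
        hence S2: "?S = 4 * ?n - 2" using cases by blast
        have ge3: "3 \<le> dg V E x" if "x \<in> V" for x using H[OF that] S2 n6 by presburger
        obtain x where x: "x \<in> V" "dg V E x \<le> 3"
        proof (rule ccontr)
          assume "\<not> thesis"
          hence "\<forall>x\<in>V. 4 \<le> dg V E x" using that by fastforce
          hence "(\<Sum>x\<in>V. (4::nat)) \<le> ?S" by (intro sum_mono) auto
          thus False using cV S2 m5 by simp
        qed
        hence "dg V E x = 3" using ge3 by fastforce
        thus ?thesis using stepII[OF IH fV cV m5 sgE x(1) _ S _ nb] ge3 by blast
      qed
    qed
  qed
qed

lemma main: "5 \<le> n \<Longrightarrow> good n"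
proof (induction n)
  case 0 thus ?case by simp
next
  case (Suc m)
  show ?case
  proof (cases "m < 5")
    case True hence "Suc m = 5" using Suc.prems by simp
    thus ?thesis using good5 by simp
  next
    case False thus ?thesis using Suc.IH good_step by simp
  qed
qed



lemma sg_conv: "simple_graph_on n E \<longleftrightarrow> sg {0..<n} E"
  unfolding simple_graph_on_def sg_def by auto

lemma deg_conv: "degree n E i = dg {0..<n} E i"
  unfolding degree_def dg_def by (rule arg_cong[where f=card]) auto

lemma realizes_conv: "realizes E S \<longleftrightarrow> sg {0..<length S} E \<and> (\<forall>i<length S. dg {0..<length S} E i = S!i)"
  unfolding realizes_def sg_conv deg_conv by simp

lemma sum_conv: assumes "\<forall>i<length S. dg {0..<length S} E i = S!i"
  shows "(\<Sum>y\<in>{0..<length S}. dg {0..<length S} E y) = sum_list S"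
  using assms by (simp add: sum_list_sum_nth)

lemma lt5: "(i::nat) < 5 \<longleftrightarrow> i = 0 \<or> i = 1 \<or> i = 2 \<or> i = 3 \<or> i = 4" by presburger
lemma lt6: "(i::nat) < 6 \<longleftrightarrow> i = 0 \<or> i = 1 \<or> i = 2 \<or> i = 3 \<or> i = 4 \<or> i = 5" by presburger

lemma contains_book: assumes "sg {0..<n} E"
  shows "contains_subgraph n E 5 K311 \<longleftrightarrow> book E"
proof
  assume "contains_subgraph n E 5 K311"
  then obtain f where f: "inj_on f {0..<5}" "f ` {0..<5} \<subseteq> {0..<n}" "\<forall>i<5. \<forall>j<5. K311 i j \<longrightarrow> E (f i) (f j)"
    unfolding contains_subgraph_def by blast
  have K: "K311 3 4" "K311 3 0" "K311 3 1" "K311 3 2" "K311 4 0" "K311 4 1" "K311 4 2"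
    by (simp_all add: K311_def part311_def)
  have e: "E (f 3) (f 4)" "E (f 3) (f 0)" "E (f 3) (f 1)" "E (f 3) (f 2)" "E (f 4) (f 0)" "E (f 4) (f 1)" "E (f 4) (f 2)"
    using K by (simp_all add: f(3)[rule_format])
  have h: "f i \<noteq> f j" if "i < 5" "j < 5" "i \<noteq> j" for i j using inj_onD[OF f(1), of i j] that by auto
  have "distinct [f 3, f 4, f 0, f 1, f 2]"
    using h[of 3 4] h[of 3 0] h[of 3 1] h[of 3 2] h[of 4 0] h[of 4 1] h[of 4 2] h[of 0 1] h[of 0 2] h[of 1 2] by auto
  thus "book E" using bookI[of "f 3" "f 4" "f 0" "f 1" "f 2" E] e by blast
next
  assume "book E"
  then obtain u v a b c where "copy E u v a b c" using book_copy by blast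
  hence d: "distinct [u,v,a,b,c]" and e: "E u v" "E u a" "E u b" "E u c" "E v a" "E v b" "E v c"
    unfolding copy_def by auto
  have e': "E v u" "E a u" "E b u" "E c u" "E a v" "E b v" "E c v"
    using sgS[OF assms e(1)] sgS[OF assms e(2)] sgS[OF assms e(3)] sgS[OF assms e(4)]
      sgS[OF assms e(5)] sgS[OF assms e(6)] sgS[OF assms e(7)] by auto
  have inV: "u \<in> {0..<n}" "v \<in> {0..<n}" "a \<in> {0..<n}" "b \<in> {0..<n}" "c \<in> {0..<n}"
    using sgD(1)[OF assms e(1)] sgD(2)[OF assms e(1)] sgD(2)[OF assms e(2)] sgD(2)[OF assms e(3)]
      sgD(2)[OF assms e(4)] by auto
  let ?f = "nth [a,b,c,u,v]"
  have d': "distinct [a,b,c,u,v]" using d by auto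
  have "inj_on ?f {0..<5}" using inj_on_nth[OF d', of "{0..<5}"] by simp
  moreover have "?f ` {0..<5} \<subseteq> {0..<n}"
  proof
    fix y assume "y \<in> ?f ` {0..<5}"
    then obtain i where "i < 5" "y = ?f i" by auto
    thus "y \<in> {0..<n}" using inV unfolding lt5 by auto
  qed
  moreover have "\<forall>i<5. \<forall>j<5. K311 i j \<longrightarrow> E (?f i) (?f j)"
  proof (intro allI impI)
    fix i j assume "i < 5" "j < 5" "K311 i j"
    thus "E (?f i) (?f j)" unfolding lt5 using e e' by (elim disjE) (simp_all add: K311_def part311_def)
  qed
  ultimately have "inj_on ?f {0..<5} \<and> ?f ` {0..<5} \<subseteq> {0..<n} \<and> (\<forall>i<5. \<forall>j<5. K311 i j \<longrightarrow> E (?f i) (?f j))"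
    by (intro conjI)
  thus "contains_subgraph n E 5 K311" unfolding contains_subgraph_def by (rule exI[where x="nth [a,b,c,u,v]"])
qed

lemma pg_iff: "potentially_graphic 5 K311 S \<longleftrightarrow> (\<exists>E. realizes E S \<and> book E)"
  unfolding potentially_graphic_def graphical_def using contains_book realizes_conv by blast

lemma dg_ge_copy: assumes "sg V E" "finite V" "copy E u v a b c" shows "4 \<le> dg V E u" "4 \<le> dg V E v"
proof -
  have c: "distinct [u,v,a,b,c]" "E u v" "E u a" "E u b" "E u c" "E v a" "E v b" "E v c" using assms(3) unfolding copy_def by auto
  have inV: "u \<in> V" "v \<in> V" "a \<in> V" "b \<in> V" "c \<in> V" using copy_in[OF assms(1,3)] by auto
  have "E v u" using c sgS[OF assms(1)] by blast
  have s1: "{v,a,b,c} \<subseteq> {y\<in>V. E u y}" using c inV by auto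
  have s2: "{u,a,b,c} \<subseteq> {y\<in>V. E v y}" using c inV \<open>E v u\<close> by auto
  have c1: "card {v,a,b,c} = 4" "card {u,a,b,c} = 4" using c(1) by auto
  show "4 \<le> dg V E u" unfolding dg_def using card_mono[OF _ s1] assms(2) c1 by simp
  show "4 \<le> dg V E v" unfolding dg_def using card_mono[OF _ s2] assms(2) c1 by simp
qed

lemma oct_nobook: assumes O: "oct W H" shows "\<not> book H"
proof
  assume "book H"
  then obtain u v a b c where cp: "copy H u v a b c" using book_copy by blast
  have sgH: "sg W H" and fW: "finite W" and cW: "card W = 6" using O unfolding oct_def by auto
  have c: "distinct [u,v,a,b,c]" "H u v" "H u a" "H u b" "H u c" "H v a" "H v b" "H v c" using cp unfolding copy_def by auto
  have inW: "u \<in> W" "v \<in> W" "a \<in> W" "b \<in> W" "c \<in> W" using copy_in[OF sgH cp] by auto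
  have "H v u" using sgS[OF sgH c(2)] .
  define au where "au = anti W H u"
  define av where "av = anti W H v"
  have a1: "au \<in> W" "av \<in> W" "au \<noteq> u" "av \<noteq> v"
    using oct_anti_in[OF O inW(1)] oct_anti_in[OF O inW(2)] oct_anti_ne[OF O inW(1)] oct_anti_ne[OF O inW(2)]
    unfolding au_def av_def by auto
  have a2: "v \<noteq> au" "a \<noteq> au" "b \<noteq> au" "c \<noteq> au"
    using oct_adj[OF O inW(1) inW(2)] oct_adj[OF O inW(1) inW(3)] oct_adj[OF O inW(1) inW(4)]
      oct_adj[OF O inW(1) inW(5)] c(2-5) unfolding au_def by blast+
  have a3: "u \<noteq> av" "a \<noteq> av" "b \<noteq> av" "c \<noteq> av"
    using oct_adj[OF O inW(2) inW(1)] oct_adj[OF O inW(2) inW(3)] oct_adj[OF O inW(2) inW(4)]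
      oct_adj[OF O inW(2) inW(5)] \<open>H v u\<close> c(6-8) unfolding av_def by blast+
  have a4: "au \<noteq> av"
  proof
    assume "au = av"
    hence "u = v" using oct_anti_inj[OF O inW(1) inW(2)] unfolding au_def av_def by blast
    thus False using c(1) by simp
  qed
  have "distinct [u,v,a,b,c,au,av]" using c(1) a1(3,4) a2 a3 a4 by auto
  hence "card (set [u,v,a,b,c,au,av]) = 7" by (simp add: distinct_card)
  moreover have "set [u,v,a,b,c,au,av] \<subseteq> W" using inW a1 by auto
  ultimately have "7 \<le> card W" using card_mono[OF fW] by metis
  thus False using cW by simp
qed



definition cxE :: "nat \<Rightarrow> nat \<Rightarrow> nat \<Rightarrow> bool" where
  "cxE n i j \<longleftrightarrow> i < n \<and> j < n \<and> i \<noteq> j \<and>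
     (i = 0 \<or> j = 0 \<or> j = i + 1 \<or> i = j + 1 \<or> (i = 1 \<and> j = n - 1) \<or> (j = 1 \<and> i = n - 1))"

definition cx :: "nat \<Rightarrow> nat list" where "cx n = (n - 1) # replicate (n - 1) 3"

lemma cx_len: "1 \<le> n \<Longrightarrow> length (cx n) = n" by (simp add: cx_def)

lemma cx_nth: "1 \<le> n \<Longrightarrow> i < n \<Longrightarrow> cx n ! i = (if i = 0 then n - 1 else 3)"
  by (cases i) (auto simp: cx_def)

lemma cx_sum: "1 \<le> n \<Longrightarrow> sum_list (cx n) = 4 * n - 4"
  by (simp add: cx_def sum_list_replicate)

lemma cx_sg: "sg {0..<n} (cxE n)"
  unfolding sg_def cxE_def by auto

lemma cx_dg: assumes "5 \<le> n" "i < n" shows "dg {0..<n} (cxE n) i = cx n ! i"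
proof (cases "i = 0")
  case True
  have "{j\<in>{0..<n}. cxE n i j} = {1..<n}" using True by (auto simp: cxE_def)
  thus ?thesis using True assms by (simp add: dg_def cx_nth)
next
  case False
  have N: "{j\<in>{0..<n}. cxE n i j} = (if i = 1 then {0,2,n-1} else if i = n - 1 then {0,n-2,1} else {0,i-1,i+1})"
  proof (cases "i = 1")
    case True thus ?thesis using assms by (auto simp: cxE_def)
  next
    case F1: False
    show ?thesis
    proof (cases "i = n - 1")
      case True thus ?thesis using assms F1 False by (auto simp: cxE_def)
    next
      case F2: False
      thus ?thesis using assms F1 False by (auto simp: cxE_def)
    qed
  qed
  have "card (if i = 1 then {0,2,n-1} else if i = n - 1 then {0,n-2,1} else {0,i-1,i+1}) = 3"
    using assms False by auto
  thus ?thesis using N False assms by (simp add: dg_def cx_nth)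
qed

lemma cx_realizes: "5 \<le> n \<Longrightarrow> realizes (cxE n) (cx n)"
  unfolding realizes_conv using cx_sg cx_dg cx_len by simp

lemma cx_notpg: assumes "5 \<le> n" shows "\<not> potentially_graphic 5 K311 (cx n)"
proof
  assume "potentially_graphic 5 K311 (cx n)"
  then obtain E where E: "realizes E (cx n)" "book E" using pg_iff by blast
  have sgE: "sg {0..<n} E" and dgE: "\<forall>i<n. dg {0..<n} E i = cx n ! i"
    using E(1) cx_len[of n] assms unfolding realizes_conv by auto
  obtain u v a b c where cp: "copy E u v a b c" using E(2) book_copy by blast
  have uv: "u \<in> {0..<n}" "v \<in> {0..<n}" "u \<noteq> v" using copy_in[OF sgE cp] cp unfolding copy_def by auto
  have "4 \<le> dg {0..<n} E u" "4 \<le> dg {0..<n} E v" using dg_ge_copy[OF sgE _ cp] by auto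
  hence "4 \<le> cx n ! u" "4 \<le> cx n ! v" using dgE uv by auto
  hence "u = 0" "v = 0" using cx_nth[of n u] cx_nth[of n v] uv assms by (auto split: if_splits)
  thus False using uv by simp
qed

definition octE :: "nat \<Rightarrow> nat \<Rightarrow> bool" where
  "octE i j \<longleftrightarrow> i < 6 \<and> j < 6 \<and> i mod 3 \<noteq> j mod 3"

lemma filt_insert: "{x \<in> insert a B. P x} = (if P a then insert a {x\<in>B. P x} else {x\<in>B. P x})"
  by auto

lemma six: "{0..<6::nat} = {0,1,2,3,4,5}"
  unfolding set_eq_iff atLeastLessThan_iff lt6 by simp

lemma oct_realizes: "realizes octE [4,4,4,4,4,4]"
proof -
  have sg: "sg {0..<6} octE" unfolding sg_def octE_def by auto
  have h: "dg {0..<6} octE i = 4" if "i < 6" for i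
  proof -
    have "i = 0 \<or> i = 1 \<or> i = 2 \<or> i = 3 \<or> i = 4 \<or> i = 5" using that lt6 by blast
    thus ?thesis unfolding dg_def six by (elim disjE) (simp_all only: filt_insert, simp_all add: octE_def)
  qed
  have "\<forall>i<6. dg {0..<6} octE i = [4,4,4,4,4,4::nat] ! i"
  proof (intro allI impI)
    fix i :: nat assume i6: "i < 6"
    hence "i = 0 \<or> i = 1 \<or> i = 2 \<or> i = 3 \<or> i = 4 \<or> i = 5" using lt6 by blast
    thus "dg {0..<6} octE i = [4,4,4,4,4,4::nat] ! i" using h[OF i6] by (elim disjE) simp_all
  qed
  moreover have len: "length [4,4,4,4,4,4::nat] = 6" by simp
  ultimately show ?thesis unfolding realizes_conv len using sg by simp
qed

lemma oct_notpg: "\<not> potentially_graphic 5 K311 [4,4,4,4,4,4]"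
proof
  assume "potentially_graphic 5 K311 [4,4,4,4,4,4]"
  then obtain E where E: "realizes E [4,4,4,4,4,4]" "book E" using pg_iff by blast
  have len: "length [4,4,4,4,4,4::nat] = 6" by simp
  have sgE: "sg {0..<6} E" and dgE: "\<forall>i<6. dg {0..<6} E i = [4,4,4,4,4,4::nat] ! i"
    using E(1) unfolding realizes_conv len by auto
  have "\<forall>y\<in>{0..<6}. dg {0..<6} E y = 4"
  proof
    fix i :: nat assume "i \<in> {0..<6}"
    hence i6: "i < 6" by simp
    hence "i = 0 \<or> i = 1 \<or> i = 2 \<or> i = 3 \<or> i = 4 \<or> i = 5" using lt6 by blast
    thus "dg {0..<6} E i = 4" using dgE i6 by (elim disjE) simp_all
  qed
  hence "oct {0..<6} E" unfolding oct_def using sgE by simp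
  thus False using oct_nobook E(2) by blast
qed

lemma suff: assumes "5 \<le> n" "length S = n" "graphical S" "4 * n - 2 \<le> sum_list S"
  shows "potentially_graphic 5 K311 S \<or> (n = 6 \<and> (\<forall>i<n. S ! i = 4))"
proof -
  obtain E where E: "realizes E S" using assms(3) unfolding graphical_def by blast
  have sgE: "sg {0..<n} E" and dgE: "\<forall>i<n. dg {0..<n} E i = S ! i"
    using E assms(2) unfolding realizes_conv by auto
  have Ssum: "(\<Sum>y\<in>{0..<n}. dg {0..<n} E y) = sum_list S" using sum_conv[of S E] dgE assms(2) by simp
  have "good n" using main assms(1) .
  hence "pot {0..<n} E \<or> (n = 6 \<and> (\<forall>y\<in>{0..<n}. dg {0..<n} E y = 4))"
    unfolding good_def using sgE Ssum assms(4) by simp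
  thus ?thesis
  proof
    assume "pot {0..<n} E"
    then obtain F where F: "sg {0..<n} F" "\<forall>x\<in>{0..<n}. dg {0..<n} F x = dg {0..<n} E x" "book F"
      unfolding pot_def by blast
    have "realizes F S" unfolding realizes_conv using F dgE assms(2) by auto
    thus ?thesis using pg_iff F(3) by blast
  next
    assume "n = 6 \<and> (\<forall>y\<in>{0..<n}. dg {0..<n} E y = 4)"
    thus ?thesis using dgE by auto
  qed
qed

lemma even_le: "even (l::nat) \<Longrightarrow> even L \<Longrightarrow> l < L \<Longrightarrow> l \<le> L - 2"
  by (auto elim!: evenE)

lemma all4: assumes "length S = 6" "\<forall>i<6. S ! i = (4::nat)" shows "S = [4,4,4,4,4,4]"
proof (rule nth_equalityI)
  show "length S = length [4,4,4,4,4,4::nat]" using assms(1) by simp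
  fix i assume "i < length S"
  hence i6: "i < 6" using assms(1) by simp
  hence "i = 0 \<or> i = 1 \<or> i = 2 \<or> i = 3 \<or> i = 4 \<or> i = 5" using lt6 by blast
  thus "S ! i = [4,4,4,4,4,4::nat] ! i" using assms(2) i6 by (elim disjE) simp_all
qed

theorem theorem2:
  shows "(\<forall>n::nat. (n = 5 \<or> n \<ge> 7) \<longrightarrow> sigma_pot 5 K311 n = 4 * n - 2)
    \<and> (\<forall>S. length S = 6 \<and> graphical S \<and> sum_list S \<ge> 22 \<longrightarrow>
           potentially_graphic 5 K311 S \<or> S = [4,4,4,4,4,4])
    \<and> \<not> potentially_graphic 5 K311 [4,4,4,4,4,4]
    \<and> sigma_pot 5 K311 6 = 26"
proof (intro conjI allI impI)
  fix n :: nat assume n: "n = 5 \<or> n \<ge> 7"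
  hence n5: "5 \<le> n" "n \<noteq> 6" by auto
  show "sigma_pot 5 K311 n = 4 * n - 2"
    unfolding sigma_pot_def
  proof (rule Least_equality)
    show "even (4 * n - 2) \<and> (\<forall>S. length S = n \<and> graphical S \<and> 4 * n - 2 \<le> sum_list S \<longrightarrow> potentially_graphic 5 K311 S)"
    proof
      show "even (4 * n - 2)" using n5 by presburger
      show "\<forall>S. length S = n \<and> graphical S \<and> 4 * n - 2 \<le> sum_list S \<longrightarrow> potentially_graphic 5 K311 S"
      proof (intro allI impI)
        fix S assume "length S = n \<and> graphical S \<and> 4 * n - 2 \<le> sum_list S"
        thus "potentially_graphic 5 K311 S" using suff[of n S] n5 by blast
      qed
    qed
  next
    fix l assume l: "even l \<and> (\<forall>S. length S = n \<and> graphical S \<and> l \<le> sum_list S \<longrightarrow> potentially_graphic 5 K311 S)"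
    show "4 * n - 2 \<le> l"
    proof (rule ccontr)
      assume "\<not> ?thesis"
      hence "l < 4 * n - 2" by simp
      moreover have "even (4 * n - 2)" using n5 by presburger
      ultimately have "l \<le> 4 * n - 4" using even_le[of l "4*n-2"] l by simp
      hence "l \<le> sum_list (cx n)" using cx_sum[of n] n5 by simp
      moreover have "graphical (cx n)" unfolding graphical_def using cx_realizes n5 by blast
      moreover have "length (cx n) = n" using cx_len n5 by simp
      ultimately have "potentially_graphic 5 K311 (cx n)" using l by blast
      thus False using cx_notpg n5 by blast
    qed
  qed
next
  fix S :: "nat list" assume S: "length S = 6 \<and> graphical S \<and> 22 \<le> sum_list S"
  hence "potentially_graphic 5 K311 S \<or> (\<forall>i<6. S ! i = 4)" using suff[of 6 S] by simp
  thus "potentially_graphic 5 K311 S \<or> S = [4,4,4,4,4,4]"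
  proof
    assume a: "\<forall>i<6. S ! i = 4"
    have "S = [4,4,4,4,4,4]" using all4 S a by blast
    thus ?thesis by blast
  qed blast
next
  show "\<not> potentially_graphic 5 K311 [4,4,4,4,4,4]" by (rule oct_notpg)
next
  show "sigma_pot 5 K311 6 = 26"
    unfolding sigma_pot_def
  proof (rule Least_equality)
    show "even (26::nat) \<and> (\<forall>S. length S = 6 \<and> graphical S \<and> 26 \<le> sum_list S \<longrightarrow> potentially_graphic 5 K311 S)"
    proof (intro conjI allI impI)
      show "even (26::nat)" by simp
      fix S :: "nat list" assume S: "length S = 6 \<and> graphical S \<and> 26 \<le> sum_list S"
      hence "potentially_graphic 5 K311 S \<or> (\<forall>i<6. S ! i = 4)" using suff[of 6 S] by simp
      moreover have "\<not> (\<forall>i<6. S ! i = 4)"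
      proof
        assume a: "\<forall>i<6. S ! i = 4"
        have "S = [4,4,4,4,4,4]" using all4 S a by blast
        thus False using S by simp
      qed
      ultimately show "potentially_graphic 5 K311 S" by blast
    qed
  next
    fix l assume l: "even l \<and> (\<forall>S. length S = 6 \<and> graphical S \<and> l \<le> sum_list S \<longrightarrow> potentially_graphic 5 K311 S)"
    show "26 \<le> l"
    proof (rule ccontr)
      assume "\<not> ?thesis"
      hence "l \<le> 24" using even_le[of l 26] l by simp
      moreover have "graphical [4,4,4,4,4,4]" unfolding graphical_def using oct_realizes by blast
      ultimately have "potentially_graphic 5 K311 [4,4,4,4,4,4]" using l by simp
      thus False using oct_notpg by blast
    qed
  qed
qed


end
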